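(* Assume the setting described in the context. For every $d\in\mathbb{N}$, $\varepsilon\in(0,1)$ let $F^d_\varepsilon\colon\mathbb{R}^d\to\mathbb{R}^{d\times d}$ and $G^d\colon\mathbb{R}^d\to\mathbb{R}^d$ be measurable with $\gamma^d_\varepsilon(y,z)=F^d_\varepsilon(y)G^d(z)$ for all $y,z\in\mathbb{R}^d$. For every $d\in\mathbb{N}$, $\varepsilon\in(0,1)$, $v\in\mathbb{R}^d$ let $\Phi_{\beta^d_\varepsilon},\Phi_{\sigma^d_\varepsilon,v},\Phi_{F^d_\varepsilon,v}\in\mathbf{N}$ satisfy $\beta^d_\varepsilon=\mathcal{R}(\Phi_{\beta^d_\varepsilon})$, $\sigma^d_\varepsilon(\cdot)v=\mathcal{R}(\Phi_{\sigma^d_\varepsilon,v})$, $F^d_\varepsilon(\cdot)v=\mathcal{R}(\Phi_{F^d_\varepsilon,v})$, and assume $\mathcal{D}(\Phi_{\sigma^d_\varepsilon,v})=\mathcal{D}(\Phi_{\sigma^d_\varepsilon,0})$ and $\mathcal{D}(\Phi_{F^d_\varepsilon,v})=\mathcal{D}(\Phi_{F^d_\varepsilon,0})$ for all $d,\varepsilon,v$. Let $K\in\mathbb{N}$ and $\omega\in\Omega$. Then there exists $(\mathcal{X}^{d,\theta,K,\varepsilon,t}_s)_{d\in\mathbb{N},\theta\in\Theta,\varepsilon\in(0,1),t\in[0,T),s\in(t,T]}\subseteq\mathbf{N}$ such that: (i) for all $d,\theta,\varepsilon$, $t\in[0,T)$, $s\in(t,T]$, $x\in\mathbb{R}^d$: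 $\mathcal{R}(\mathcal{X}^{d,\theta,K,\varepsilon,t}_s)\in C(\mathbb{R}^d,\mathbb{R}^d)$ and $(\mathcal{R}(\mathcal{X}^{d,\theta,K,\varepsilon,t}_s))(x)=X^{d,\theta,K,\varepsilon,t,x}_s(\omega)$; (ii) for all $d\in\mathbb{N}$, $\theta_1,\theta_2\in\Theta$, $\varepsilon\in(0,1)$, $t_1,t_2\in[0,T)$, $s_1\in(t_1,T]$, $s_2\in(t_2,T]$: $\mathcal{D}(\mathcal{X}^{d,\theta_1,K,\varepsilon,t_1}_{s_1})=\mathcal{D}(\mathcal{X}^{d,\theta_2,K,\varepsilon,t_2}_{s_2})$; (iii) for all $d,\theta,\varepsilon,t\in[0,T),s\in(t,T]$: $\dim(\mathcal{D}(\mathcal{X}^{d,\theta,K,\varepsilon,t}_s))=K\big(\max\{\dim(\mathcal{D}(\Phi_{\beta^d_\varepsilon})),\dim(\mathcal{D}(\Phi_{\sigma^d_\varepsilon,0})),\dim(\mathcal{D}(\Phi_{F^d_\varepsilon,0}))\}-1\big)+1$; (iv) for all $d,\theta,\varepsilon,t\in[0,T),s\in(t,T]$: $|||\mathcal{D}(\mathcal{X}^{d,\theta,K,\varepsilon,t}_s)|||\le2d+|||\mathcal{D}(\Phi_{\beta^d_\varepsilon})|||+|||\mathcal{D}(\Phi_{\sigma^d_\varepsilon,0})|||+|||\mathcal{D}(\Phi_{F^d_\varepsilon,0})|||$.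
   Context: Setting. $T\in(0,\infty)$, $c\in[2,\infty)$, $f\in C(\mathbb{R},\mathbb{R})$. For each $d\in\mathbb{N}$: $\beta^d\in C(\mathbb{R}^d,\mathbb{R}^d)$, $\sigma^d\in C(\mathbb{R}^d,\mathbb{R}^{d\times d})$, $\gamma^d\in C(\mathbb{R}^{2d},\mathbb{R}^d)$, $g^d\in C(\mathbb{R}^d,\mathbb{R})$, $\nu^d$ a Lévy measure on $\mathcal{B}(\mathbb{R}^d\setminus\{0\})$, satisfying: (A1) there is $C_d$ with $\|\gamma^d(x,z)\|^2\le C_d(1\wedge\|z\|^2)$, $\|\gamma^d(x,z)-\gamma^d(y,z)\|^2\le C_d\|x-y\|^2(1\wedge\|z\|^2)$; (A2) $D_x\gamma^d(x,z)$ exists and for some $\lambda_d>0$, $\lambda_d\le|\det(I_d+\delta D_x\gamma^d(x,z))|$ for all $x,z$, $\delta\in[0,1]$; (A3) $\|\beta^d(x)-\beta^d(y)\|^2+\|\sigma^d(x)-\sigma^d(y)\|_F^2+\int\|\gamma^d(x,z)-\gamma^d(y,z)\|^2\nu^d(dz)\le c\|x-y\|^2$, $|f(w_1)-f(w_2)|^2\le c|w_1-w_2|^2$, $|g^d(x)-g^d(y)|^2\le cd^cT^{-1}\|x-y\|^2$, $\|\beta^d(0)\|^2+\|\sigma^d(0)\|_F^2+\int\|\gamma^d(0,z)\|^2\nu^d(dz)+T^3(|f(0)|+1)^2+T|g^d(0)|^2\le cd^c$ (integrals over $\mathbb{R}^d\setminus\{0\}$). For $d\in\mathbb{N}$, $\varepsilon\in(0,1)$: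 $\beta^d_\varepsilon\in C(\mathbb{R}^d,\mathbb{R}^d)$, $\sigma^d_\varepsilon\in C(\mathbb{R}^d,\mathbb{R}^{d\times d})$, $\gamma^d_\varepsilon\in C(\mathbb{R}^{2d},\mathbb{R}^d)$, $g^d_\varepsilon\in C(\mathbb{R}^d,\mathbb{R})$ satisfying: (B1) the analogue of (A1) with a constant $C_{d,\varepsilon}$; (B2) $\|\beta^d_\varepsilon(x)-\beta^d_\varepsilon(y)\|^2+\|\sigma^d_\varepsilon(x)-\sigma^d_\varepsilon(y)\|_F^2+\int\|\gamma^d_\varepsilon(x,z)-\gamma^d_\varepsilon(y,z)\|^2\nu^d(dz)\le c\|x-y\|^2$, $|g^d_\varepsilon(x)-g^d_\varepsilon(y)|^2\le cd^cT^{-1}\|x-y\|^2$, $\|\beta^d_\varepsilon(0)\|^2+\|\sigma^d_\varepsilon(0)\|_F^2+\int\|\gamma^d_\varepsilon(0,z)\|^2\nu^d(dz)+T|g^d_\varepsilon(0)|^2\le cd^c$, and $\|\beta^d_\varepsilon(x)-\beta^d(x)\|^2+\|\sigma^d_\varepsilon(x)-\sigma^d(x)\|_F^2+\int\|\gamma^d_\varepsilon(x,z)-\gamma^d(x,z)\|^2\nu^d(dz)+|g^d_\varepsilon(x)-g^d(x)|^2\le\varepsilon cd^c(d^c+\|x\|^2)$ for all $x,y$. Probability. $(\Omega,\mathcal{F},\mathbb{P},(\mathbb{F}_t)_{t\in[0,T]})$ a filtered probability space with the usual conditions; $\Theta=\bigcup_{n\in\mathbb{N}}\mathbb{Z}^n$;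 for each $d$, $W^{d,\theta}$ ($\theta\in\Theta$) i.i.d. standard $d$-dim $(\mathbb{F}_t)$-Brownian motions, $N^{d,\theta}$ independent $(\mathbb{F}_t)$-Poisson random measures on $[0,\infty)\times(\mathbb{R}^d\setminus\{0\})$ with compensator $\nu^d(dz)dt$, $\tilde N^{d,\theta}=N^{d,\theta}-\nu^d(dz)dt$; $\mathcal{F}_0$, $(W^{d,\theta})$, $(N^{d,\theta})$ (and i.i.d. uniform variables $(\mathfrak{t}^\theta)$) independent. For $K\in\mathbb{N}$, $\lfloor t\rfloor_K=\max(\{0,\frac TK,\dots,T\}\cap((-\infty,t)\cup\{0\}))$, and $X^{d,\theta,K,\varepsilon,t,x}$ on $[t,T]$ satisfies $X_s=x+\int_t^s\beta^d_\varepsilon(X_{\max\{t,\lfloor u-\rfloor_K\}})du+\int_t^s\sigma^d_\varepsilon(X_{\max\{t,\lfloor u-\rfloor_K\}})dW^{d,\theta}_u+\int_t^s\int_{\mathbb{R}^d\setminus\{0\}}\gamma^d_\varepsilon(X_{\max\{t,\lfloor u-\rfloor_K\}},z)\tilde N^{d,\theta}(dz,du)$. Networks. $\mathbf{A}_k$ componentwise ReLU; $\mathbf{N}=\bigcup_{H\in\mathbb{N}}\bigcup_{(k_0,\dots,k_{H+1})\in\mathbb{N}^{H+2}}\prod_{m=1}^{H+1}(\mathbb{R}^{k_m\times k_{m-1}}\times\mathbb{R}^{k_m})$; for $\Phi=((W_1,B_1),\dots,(W_{H+1},B_{H+1}))$: $\mathcal{D}(\Phi)=(k_0,\dots,k_{H+1})$,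 $\mathcal{R}(\Phi)\in C(\mathbb{R}^{k_0},\mathbb{R}^{k_{H+1}})$, $(\mathcal{R}(\Phi))(x_0)=W_{H+1}x_H+B_{H+1}$ with $x_m=\mathbf{A}_{k_m}(W_mx_{m-1}+B_m)$. For a vector $x=(x_1,\dots,x_k)$: $\dim(x)=k$, $|||x|||=\max_i|x_i|$. $\|\cdot\|$ Euclidean, $\|\cdot\|_F$ Frobenius norm. *)

theory Defs
  imports "HOL-Analysis.Analysis"
begin

definition idx :: "'a::finite list" where
  "idx = (SOME xs. distinct xs \<and> set xs = UNIV)"

definition vlist :: "real^'d \<Rightarrow> real list" where
  "vlist x = map (vec_nth x) idx"

definition listv :: "real list \<Rightarrow> real^'d" where
  "listv xs = (\<chi> i. xs ! (THE n. n < length (idx :: 'd list) \<and> idx ! n = i))"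

type_synonym net = "(real list list \<times> real list) list"

definition dims :: "net \<Rightarrow> nat list" where
  "dims \<Phi> = (case \<Phi> of [] \<Rightarrow> [] | (W, B) # _ \<Rightarrow> [length (hd W)]) @ map (\<lambda>(W, B). length B) \<Phi>"

definition wf_net :: "net \<Rightarrow> bool" where
  "wf_net \<Phi> \<longleftrightarrow> length \<Phi> \<ge> 2 \<and> (\<forall>k\<in>set (dims \<Phi>). k \<ge> 1) \<and>
     (\<forall>m<length \<Phi>. length (fst (\<Phi> ! m)) = dims \<Phi> ! (Suc m) \<and>
        (\<forall>row\<in>set (fst (\<Phi> ! m)). length row = dims \<Phi> ! m))"

definition NN :: "net set" where
  "NN = {\<Phi>. wf_net \<Phi>}"

definition mv :: "real list list \<Rightarrow> real list \<Rightarrow> real list" where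
  "mv W x = map (\<lambda>row. sum_list (map2 (*) row x)) W"

fun realize :: "net \<Rightarrow> real list \<Rightarrow> real list" where
  "realize [] x = x"
| "realize [(W, B)] x = map2 (+) (mv W x) B"
| "realize ((W, B) # L) x = realize L (map (\<lambda>y. max 0 y) (map2 (+) (mv W x) B))"

definition maxnorm :: "nat list \<Rightarrow> nat" where
  "maxnorm ks = Max (set ks)"

definition realizes :: "net \<Rightarrow> (real^'d \<Rightarrow> real^'d) \<Rightarrow> bool" where
  "realizes \<Phi> h \<longleftrightarrow> \<Phi> \<in> NN \<and> hd (dims \<Phi>) = CARD('d) \<and> last (dims \<Phi>) = CARD('d) \<and>
     (\<forall>x. realize \<Phi> (vlist x) = vlist (h x))"

definition levy_measure :: "(real^'d) measure \<Rightarrow> bool" where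
  "levy_measure \<nu> \<longleftrightarrow> sets \<nu> = sets (restrict_space borel (UNIV - {0})) \<and>
     (\<integral>\<^sup>+ z. ennreal (min 1 (norm z ^ 2)) \<partial>\<nu>) < \<infinity>"

definition jump_bound :: "(real^'d \<Rightarrow> real^'d \<Rightarrow> real^'d) \<Rightarrow> bool" where
  "jump_bound \<gamma> \<longleftrightarrow> (\<exists>C. \<forall>x y z. norm (\<gamma> x z) ^ 2 \<le> C * min 1 (norm z ^ 2) \<and>
      norm (\<gamma> x z - \<gamma> y z) ^ 2 \<le> C * norm (x - y) ^ 2 * min 1 (norm z ^ 2))"

definition setting ::
  "real \<Rightarrow> real \<Rightarrow> (real \<Rightarrow> real) \<Rightarrow> (real^'d \<Rightarrow> real^'d) \<Rightarrow> (real^'d \<Rightarrow> real^'d^'d)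
   \<Rightarrow> (real^'d \<Rightarrow> real^'d \<Rightarrow> real^'d) \<Rightarrow> (real^'d \<Rightarrow> real) \<Rightarrow> (real^'d) measure
   \<Rightarrow> (real \<Rightarrow> real^'d \<Rightarrow> real^'d) \<Rightarrow> (real \<Rightarrow> real^'d \<Rightarrow> real^'d^'d)
   \<Rightarrow> (real \<Rightarrow> real^'d \<Rightarrow> real^'d \<Rightarrow> real^'d) \<Rightarrow> (real \<Rightarrow> real^'d \<Rightarrow> real) \<Rightarrow> bool" where
  "setting T c f \<beta> \<sigma> \<gamma> g \<nu> \<beta>e \<sigma>e \<gamma>e ge \<longleftrightarrow>
   (let d = real CARD('d) in
    0 < T \<and> 2 \<le> c \<and> continuous_on UNIV f \<and>
    continuous_on UNIV \<beta> \<and> continuous_on UNIV \<sigma> \<and> continuous_on UNIV (\<lambda>(x, z). \<gamma> x z) \<and>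
    continuous_on UNIV g \<and> levy_measure \<nu> \<and>
    \<comment> \<open>(A1)\<close>
    jump_bound \<gamma> \<and>
    \<comment> \<open>(A2)\<close>
    (\<exists>lam>0. \<exists>D. \<forall>x z. ((\<lambda>y. \<gamma> y z) has_derivative D x z) (at x) \<and>
        (\<forall>\<delta>\<in>{0..1}. lam \<le> \<bar>det (mat 1 + \<delta> *\<^sub>R matrix (D x z))\<bar>)) \<and>
    \<comment> \<open>(A3)\<close>
    (\<forall>x y. ennreal (norm (\<beta> x - \<beta> y) ^ 2 + norm (\<sigma> x - \<sigma> y) ^ 2)
             + (\<integral>\<^sup>+ z. ennreal (norm (\<gamma> x z - \<gamma> y z) ^ 2) \<partial>\<nu>) \<le> ennreal (c * norm (x - y) ^ 2)) \<and>
    (\<forall>w1 w2. \<bar>f w1 - f w2\<bar> ^ 2 \<le> c * \<bar>w1 - w2\<bar> ^ 2) \<and>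
    (\<forall>x y. \<bar>g x - g y\<bar> ^ 2 \<le> c * d powr c / T * norm (x - y) ^ 2) \<and>
    ennreal (norm (\<beta> 0) ^ 2 + norm (\<sigma> 0) ^ 2 + T ^ 3 * (\<bar>f 0\<bar> + 1) ^ 2 + T * \<bar>g 0\<bar> ^ 2)
      + (\<integral>\<^sup>+ z. ennreal (norm (\<gamma> 0 z) ^ 2) \<partial>\<nu>) \<le> ennreal (c * d powr c) \<and>
    \<comment> \<open>(B1), (B2)\<close>
    (\<forall>\<epsilon>\<in>{0<..<1}.
       continuous_on UNIV (\<beta>e \<epsilon>) \<and> continuous_on UNIV (\<sigma>e \<epsilon>) \<and>
       continuous_on UNIV (\<lambda>(x, z). \<gamma>e \<epsilon> x z) \<and> continuous_on UNIV (ge \<epsilon>) \<and>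
       jump_bound (\<gamma>e \<epsilon>) \<and>
       (\<forall>x y. ennreal (norm (\<beta>e \<epsilon> x - \<beta>e \<epsilon> y) ^ 2 + norm (\<sigma>e \<epsilon> x - \<sigma>e \<epsilon> y) ^ 2)
             + (\<integral>\<^sup>+ z. ennreal (norm (\<gamma>e \<epsilon> x z - \<gamma>e \<epsilon> y z) ^ 2) \<partial>\<nu>) \<le> ennreal (c * norm (x - y) ^ 2)) \<and>
       (\<forall>x y. \<bar>ge \<epsilon> x - ge \<epsilon> y\<bar> ^ 2 \<le> c * d powr c / T * norm (x - y) ^ 2) \<and>
       ennreal (norm (\<beta>e \<epsilon> 0) ^ 2 + norm (\<sigma>e \<epsilon> 0) ^ 2 + T * \<bar>ge \<epsilon> 0\<bar> ^ 2)
         + (\<integral>\<^sup>+ z. ennreal (norm (\<gamma>e \<epsilon> 0 z) ^ 2) \<partial>\<nu>) \<le> ennreal (c * d powr c) \<and>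
       (\<forall>x. ennreal (norm (\<beta>e \<epsilon> x - \<beta> x) ^ 2 + norm (\<sigma>e \<epsilon> x - \<sigma> x) ^ 2 + \<bar>ge \<epsilon> x - g x\<bar> ^ 2)
             + (\<integral>\<^sup>+ z. ennreal (norm (\<gamma>e \<epsilon> x z - \<gamma> x z) ^ 2) \<partial>\<nu>)
           \<le> ennreal (\<epsilon> * c * d powr c * (d powr c + norm x ^ 2)))))"

definition flr :: "real \<Rightarrow> nat \<Rightarrow> real \<Rightarrow> real" where
  "flr T K t = Max ({T * real k / real K | k. k \<le> K} \<inter> ({..<t} \<union> {0}))"

definition part :: "real \<Rightarrow> nat \<Rightarrow> real \<Rightarrow> real \<Rightarrow> real list" where
  "part T K t s = sorted_list_of_set
     ({t, s} \<union> {T * real k / real K | k. k \<le> K \<and> t < T * real k / real K \<and> T * real k / real K < s})"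

text \<open>stochastic integral of a left-continuous step integrand H (constant on each
  (P!i, P!(i+1)]) against the driving path Z\<close>
definition simple_int :: "real list \<Rightarrow> (real \<Rightarrow> real^'d^'d) \<Rightarrow> (real \<Rightarrow> real^'d) \<Rightarrow> real^'d" where
  "simple_int P H Z = (\<Sum>i < length P - 1. H (P ! Suc i) *v (Z (P ! Suc i) - Z (P ! i)))"

text \<open>X solves the (piecewise-frozen) SDE on [t,T] started at x, driven by Brownian path Wp and
  by the path Jp of the compensated Poisson integral of G (the jump coefficient being F(y) G(z)).\<close>
definition euler_eq ::
  "real \<Rightarrow> nat \<Rightarrow> (real^'d \<Rightarrow> real^'d) \<Rightarrow> (real^'d \<Rightarrow> real^'d^'d) \<Rightarrow> (real^'d \<Rightarrow> real^'d^'d)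
   \<Rightarrow> (real \<Rightarrow> real^'d) \<Rightarrow> (real \<Rightarrow> real^'d) \<Rightarrow> real \<Rightarrow> real^'d \<Rightarrow> (real \<Rightarrow> real^'d) \<Rightarrow> bool" where
  "euler_eq T K b s F Wp Jp t x X \<longleftrightarrow>
    (\<forall>r\<in>{t..T}. X r = x
        + integral {t..r} (\<lambda>u. b (X (max t (flr T K u))))
        + simple_int (part T K t r) (\<lambda>u. s (X (max t (flr T K u)))) Wp
        + simple_int (part T K t r) (\<lambda>u. F (X (max t (flr T K u)))) Jp)"

end

theory Submission
  imports Defs
begin

type_synonym layer = "real list list \<times> real list"

definition dot :: "real list \<Rightarrow> real list \<Rightarrow> real" where
  "dot r x = sum_list (map2 (*) r x)"
definition relu :: "real list \<Rightarrow> real list" where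
  "relu xs = map (\<lambda>y. max 0 y) xs"
definition aff :: "layer \<Rightarrow> real list \<Rightarrow> real list" where
  "aff L x = map2 (+) (mv (fst L) x) (snd L)"
definition negl :: "real list \<Rightarrow> real list" where
  "negl = map uminus"
definition zeros :: "nat \<Rightarrow> real list" where
  "zeros n = replicate n 0"
definition unitv :: "nat \<Rightarrow> nat \<Rightarrow> real list" where
  "unitv n i = map (\<lambda>j. if j = i then 1 else 0) [0..<n]"
definition idm :: "nat \<Rightarrow> real list list" where
  "idm n = map (unitv n) [0..<n]"

lemma mv_dot: "mv W x = map (\<lambda>r. dot r x) W"
  by (simp add: mv_def dot_def)

lemma dot_nth: "dot r x = (\<Sum>j<min (length r) (length x). r ! j * x ! j)"
  unfolding dot_def sum_list_sum_nth
  by (auto intro!: sum.cong simp: atLeast0LessThan)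

lemma dot_append: "length r1 = length x1 \<Longrightarrow> dot (r1 @ r2) (x1 @ x2) = dot r1 x1 + dot r2 x2"
  by (simp add: dot_def)

lemma dot_zeros: "dot (zeros n) x = 0"
  by (simp add: dot_nth zeros_def)

lemma dot_neg: "dot (negl r) x = - dot r x"
  by (simp add: dot_nth negl_def sum_negf)

lemma dot_scale: "dot (map ((*) c) r) x = c * dot r x"
  by (simp add: dot_nth sum_distrib_left mult.assoc)

lemma dot_diff: "length a = length b \<Longrightarrow> dot r a - dot r b = dot r (map2 (-) a b)"
  by (simp add: dot_nth sum_subtractf[symmetric] right_diff_distrib)

lemma dot_unit: "i < n \<Longrightarrow> length x = n \<Longrightarrow> dot (unitv n i) x = x ! i"
proof -
  assume a: "i < n" "length x = n"
  have "dot (unitv n i) x = (\<Sum>j<n. if j = i then x ! j else 0)"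
    unfolding dot_nth using a by (intro sum.cong) (auto simp: unitv_def)
  also have "\<dots> = x ! i" using a by simp
  finally show ?thesis .
qed

lemma mv_idm: "length x = n \<Longrightarrow> mv (idm n) x = x"
  by (auto simp: mv_dot idm_def dot_unit intro!: nth_equalityI)

lemma length_aff: "length (aff L x) = min (length (fst L)) (length (snd L))"
  by (simp add: aff_def mv_def)

lemma length_relu[simp]: "length (relu x) = length x"
  by (simp add: relu_def)

lemma relu_append: "relu (a @ b) = relu a @ relu b"
  by (simp add: relu_def)

lemma relu_nonneg: "\<forall>y\<in>set a. 0 \<le> y \<Longrightarrow> relu a = a"
  by (simp add: relu_def map_idI)

lemma relu_ge0: "y \<in> set (relu a) \<Longrightarrow> 0 \<le> y"
  by (auto simp: relu_def)

lemma realize_Cons': "realize (L # A) x = (if A = [] then aff L x else realize A (relu (aff L x)))"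
  by (cases L; cases A) (auto simp: aff_def relu_def)

lemma realize_append: "A \<noteq> [] \<Longrightarrow> B \<noteq> [] \<Longrightarrow> realize (A @ B) x = realize B (relu (realize A x))"
proof (induction A arbitrary: x)
  case Nil then show ?case by simp
next
  case (Cons L A)
  show ?case
  proof (cases "A = []")
    case True then show ?thesis using Cons by (simp add: realize_Cons')
  next
    case False then show ?thesis using Cons by (simp add: realize_Cons')
  qed
qed

lemma realize_snoc: "realize (A @ [L]) x = aff L (if A = [] then x else relu (realize A x))"
  by (cases "A = []") (auto simp: realize_Cons' realize_append)

fun chain :: "nat \<Rightarrow> net \<Rightarrow> bool" where
  "chain n [] = True"
| "chain n (L # A) = (length (fst L) = length (snd L) \<and> (\<forall>r\<in>set (fst L). length r = n) \<and> chain (length (snd L)) A)"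

definition lens :: "net \<Rightarrow> nat list" where
  "lens A = map (\<lambda>L. length (snd L)) A"

lemma lens_simps[simp]: "lens [] = []" "lens (L # A) = length (snd L) # lens A" "lens (A @ B) = lens A @ lens B"
  "length (lens A) = length A" "lens A = [] \<longleftrightarrow> A = []"
  by (auto simp: lens_def)

lemma chain_append: "chain n (A @ B) \<longleftrightarrow> chain n A \<and> chain (last (n # lens A)) B"
  by (induction A arbitrary: n) auto

lemma length_realize: "chain n A \<Longrightarrow> A \<noteq> [] \<Longrightarrow> length (realize A x) = last (lens A)"
proof (induction A arbitrary: n x)
  case Nil then show ?case by simp
next
  case (Cons L A) then show ?case by (auto simp: realize_Cons' length_aff)
qed

definition dupL :: "layer \<Rightarrow> layer" where
  "dupL L = (fst L @ map negl (fst L), snd L @ negl (snd L))"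
definition postNeg :: "net \<Rightarrow> net" where
  "postNeg A = butlast A @ [dupL (last A)]"
definition joinM :: "nat \<Rightarrow> real list list" where
  "joinM k = map (\<lambda>i. unitv k i @ negl (unitv k i)) [0..<k]"
definition pad :: "net \<Rightarrow> nat \<Rightarrow> net" where
  "pad A j = postNeg A @ replicate (j - 1) (idm (2 * last (lens A)), zeros (2 * last (lens A)))
      @ [(joinM (last (lens A)), zeros (last (lens A)))]"

lemma length_negl[simp]: "length (negl x) = length x"
  by (simp add: negl_def)

lemma length_mv[simp]: "length (mv W x) = length W"
  by (simp add: mv_def)

lemma nth_negl[simp]: "i < length x \<Longrightarrow> negl x ! i = - x ! i"
  by (simp add: negl_def)

lemma aff_dupL: "length (fst L) = length (snd L) \<Longrightarrow> aff (dupL L) x = aff L x @ negl (aff L x)"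
  by (auto simp: aff_def mv_dot dupL_def negl_def nth_append dot_neg dot_neg[unfolded negl_def] intro!: nth_equalityI)

lemma chain_last: "chain n A \<Longrightarrow> A \<noteq> [] \<Longrightarrow> length (fst (last A)) = length (snd (last A))"
  by (induction A arbitrary: n) auto

lemma realize_postNeg: "A \<noteq> [] \<Longrightarrow> chain n A \<Longrightarrow>
    realize (postNeg A) x = realize A x @ negl (realize A x)"
proof -
  assume a: "A \<noteq> []" "chain n A"
  have e: "A = butlast A @ [last A]" using a by simp
  have "realize A x = aff (last A) (if butlast A = [] then x else relu (realize (butlast A) x))"
    by (subst e, subst realize_snoc) simp
  then show ?thesis unfolding postNeg_def realize_snoc
    using aff_dupL chain_last[OF a(2) a(1)] by simp
qed

lemma aff_id: "length z = n \<Longrightarrow> aff (idm n, zeros n) z = z"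
  by (auto simp: aff_def mv_idm zeros_def intro!: nth_equalityI)

lemma realize_ids: "\<forall>y\<in>set z. 0 \<le> y \<Longrightarrow> length z = n \<Longrightarrow>
    realize (replicate m (idm n, zeros n) @ [L]) z = aff L z"
proof (induction m)
  case 0 then show ?case by (simp add: realize_Cons')
next
  case (Suc m)
  then show ?case by (simp add: realize_Cons' aff_id relu_nonneg)
qed

lemma length_unitv[simp]: "length (unitv n i) = n"
  by (simp add: unitv_def)

lemma aff_joinM: "length p = k \<Longrightarrow> length q = k \<Longrightarrow> aff (joinM k, zeros k) (p @ q) = map2 (-) p q"
proof (rule nth_equalityI)
  assume a: "length p = k" "length q = k"
  show "length (aff (joinM k, zeros k) (p @ q)) = length (map2 (-) p q)"
    using a by (simp add: length_aff joinM_def zeros_def)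
  fix i assume "i < length (aff (joinM k, zeros k) (p @ q))"
  then have i: "i < k" by (simp add: length_aff joinM_def zeros_def)
  have "aff (joinM k, zeros k) (p @ q) ! i = dot (unitv k i @ negl (unitv k i)) (p @ q)"
    using i by (simp add: aff_def mv_dot joinM_def zeros_def)
  also have "\<dots> = p ! i - q ! i" using i a by (simp add: dot_append dot_neg dot_unit)
  finally show "aff (joinM k, zeros k) (p @ q) ! i = map2 (-) p q ! i" using i a by simp
qed

lemma relu_diff: "map2 (-) (relu y) (relu (negl y)) = y"
  by (auto simp: relu_def negl_def intro!: nth_equalityI)

lemma realize_pad: "chain n A \<Longrightarrow> A \<noteq> [] \<Longrightarrow> 1 \<le> j \<Longrightarrow> realize (pad A j) x = realize A x"
proof -
  assume a: "chain n A" "A \<noteq> []" "1 \<le> j"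
  define y where "y = realize A x"
  define k where "k = last (lens A)"
  have ly: "length y = k" unfolding y_def k_def using length_realize[OF a(1,2)] .
  have "realize (pad A j) x = realize (replicate (j - 1) (idm (2 * k), zeros (2 * k))
      @ [(joinM k, zeros k)]) (relu (realize (postNeg A) x))"
    unfolding pad_def k_def by (subst realize_append) (auto simp: postNeg_def)
  also have "relu (realize (postNeg A) x) = relu y @ relu (negl y)"
    using realize_postNeg[OF a(2,1)] by (simp add: y_def relu_append)
  also have "realize (replicate (j - 1) (idm (2 * k), zeros (2 * k)) @ [(joinM k, zeros k)])
      (relu y @ relu (negl y)) = aff (joinM k, zeros k) (relu y @ relu (negl y))"
    by (rule realize_ids) (auto simp: ly relu_def)
  also have "\<dots> = y" using ly by (simp add: aff_joinM relu_diff)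
  finally show ?thesis by (simp add: y_def)
qed

lemma lens_postNeg: "A \<noteq> [] \<Longrightarrow> lens (postNeg A) = butlast (lens A) @ [2 * last (lens A)]"
  by (simp add: postNeg_def dupL_def lens_def map_butlast last_map)

lemma chain_postNeg: "chain n A \<Longrightarrow> A \<noteq> [] \<Longrightarrow> chain n (postNeg A)"
proof -
  assume a: "chain n A" "A \<noteq> []"
  have e: "A = butlast A @ [last A]" using a by simp
  have "chain n (butlast A @ [last A])" using a e by simp
  then show ?thesis unfolding postNeg_def chain_append
    by (auto simp: dupL_def negl_def)
qed

lemma chain_ids: "chain (2 * k) (replicate m (idm (2 * k), zeros (2 * k)) @ [(joinM k, zeros k)])"
  by (induction m) (auto simp: idm_def zeros_def joinM_def)

lemma last_lens: "A \<noteq> [] \<Longrightarrow> last (lens A) = length (snd (last A))"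
  by (simp add: lens_def last_map)

lemma chain_pad: "chain n A \<Longrightarrow> A \<noteq> [] \<Longrightarrow> chain n (pad A j)"
proof -
  assume a: "chain n A" "A \<noteq> []"
  have "last (n # lens (postNeg A)) = 2 * last (lens A)" using a by (simp add: lens_postNeg)
  then show ?thesis unfolding pad_def chain_append[of n "postNeg A"]
    using chain_postNeg[OF a] chain_ids[of "last (lens A)" "j - 1"] by simp
qed

lemma lens_rep: "lens (replicate m L) = replicate m (length (snd L))"
  by (simp add: lens_def)

lemma lens_pad: "A \<noteq> [] \<Longrightarrow> 1 \<le> j \<Longrightarrow>
    lens (pad A j) = butlast (lens A) @ replicate j (2 * last (lens A)) @ [last (lens A)]"
proof -
  assume a: "A \<noteq> []" "1 \<le> j"
  then obtain j' where j: "j = Suc j'" by (cases j) auto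
  show ?thesis using a by (simp add: j pad_def lens_postNeg joinM_def zeros_def lens_rep)
qed

lemma length_pad: "A \<noteq> [] \<Longrightarrow> 1 \<le> j \<Longrightarrow> length (pad A j) = length A + j"
  by (simp add: pad_def postNeg_def)

definition stackL :: "layer \<Rightarrow> layer \<Rightarrow> layer" where
  "stackL L1 L2 = (fst L1 @ fst L2, snd L1 @ snd L2)"
definition bdiag :: "nat \<Rightarrow> nat \<Rightarrow> layer \<Rightarrow> layer \<Rightarrow> layer" where
  "bdiag n1 n2 L1 L2 = (map (\<lambda>r. r @ zeros n2) (fst L1) @ map (\<lambda>r. zeros n1 @ r) (fst L2), snd L1 @ snd L2)"
definition joinL :: "layer \<Rightarrow> layer \<Rightarrow> layer" where
  "joinL L1 L2 = (map2 (@) (fst L1) (fst L2), map2 (+) (snd L1) (snd L2))"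

fun ptail :: "nat \<Rightarrow> nat \<Rightarrow> net \<Rightarrow> net \<Rightarrow> net" where
  "ptail n1 n2 (L1 # A) (L2 # B) = (if A = [] then [joinL L1 L2]
      else bdiag n1 n2 L1 L2 # ptail (length (snd L1)) (length (snd L2)) A B)"
| "ptail n1 n2 _ _ = []"

fun psum :: "net \<Rightarrow> net \<Rightarrow> net" where
  "psum (L1 # A) (L2 # B) = stackL L1 L2 # ptail (length (snd L1)) (length (snd L2)) A B"
| "psum _ _ = []"

fun plens :: "nat list \<Rightarrow> nat list \<Rightarrow> nat list" where
  "plens (a # as) (b # bs) = (if as = [] then [min a b] else (a + b) # plens as bs)"
| "plens _ _ = []"

lemma length_zeros[simp]: "length (zeros n) = n"
  by (simp add: zeros_def)

lemma aff_stack: "length (fst L1) = length (snd L1) \<Longrightarrow> aff (stackL L1 L2) x = aff L1 x @ aff L2 x"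
  by (simp add: aff_def stackL_def mv_def)

lemma aff_bdiag: "length x1 = n1 \<Longrightarrow> length x2 = n2 \<Longrightarrow> \<forall>r\<in>set (fst L1). length r = n1 \<Longrightarrow>
  \<forall>r\<in>set (fst L2). length r = n2 \<Longrightarrow> length (fst L1) = length (snd L1) \<Longrightarrow>
  aff (bdiag n1 n2 L1 L2) (x1 @ x2) = aff L1 x1 @ aff L2 x2"
proof -
  assume a: "length x1 = n1" "length x2 = n2" "\<forall>r\<in>set (fst L1). length r = n1"
     "\<forall>r\<in>set (fst L2). length r = n2" "length (fst L1) = length (snd L1)"
  have m1: "map (\<lambda>r. dot (r @ zeros n2) (x1 @ x2)) (fst L1) = map (\<lambda>r. dot r x1) (fst L1)"
    using a by (auto simp: dot_append dot_zeros)
  have m2: "map (\<lambda>r. dot (zeros n1 @ r) (x1 @ x2)) (fst L2) = map (\<lambda>r. dot r x2) (fst L2)"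
    using a by (auto simp: dot_append dot_zeros)
  show ?thesis unfolding aff_def bdiag_def using a
    by (simp add: mv_dot o_def m1 m2)
qed

lemma aff_joinL: "length x1 = n1 \<Longrightarrow> \<forall>r\<in>set (fst L1). length r = n1 \<Longrightarrow>
  aff (joinL L1 L2) (x1 @ x2) = map2 (+) (aff L1 x1) (aff L2 x2)"
proof (rule nth_equalityI)
  assume a: "length x1 = n1" "\<forall>r\<in>set (fst L1). length r = n1"
  show "length (aff (joinL L1 L2) (x1 @ x2)) = length (map2 (+) (aff L1 x1) (aff L2 x2))"
    by (simp add: length_aff joinL_def)
  fix i assume "i < length (aff (joinL L1 L2) (x1 @ x2))"
  then have i: "i < length (fst L1)" "i < length (fst L2)" "i < length (snd L1)" "i < length (snd L2)"
    by (auto simp: length_aff joinL_def)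
  have "length (fst L1 ! i) = length x1" using a i by auto
  then show "aff (joinL L1 L2) (x1 @ x2) ! i = map2 (+) (aff L1 x1) (aff L2 x2) ! i"
    using i by (simp add: aff_def joinL_def mv_dot dot_append)
qed

lemma chain_ptail: "chain n1 A \<Longrightarrow> chain n2 B \<Longrightarrow> length A = length B \<Longrightarrow> chain (n1 + n2) (ptail n1 n2 A B)"
proof (induction n1 n2 A B rule: ptail.induct)
  case (1 n1 n2 L1 A L2 B)
  show ?case
  proof (cases "A = []")
    case True
    then show ?thesis using 1 by (auto simp: joinL_def set_zip)
  next
    case False
    then show ?thesis using 1 by (auto simp: bdiag_def)
  qed
qed auto

lemma realize_ptail: "chain n1 A \<Longrightarrow> chain n2 B \<Longrightarrow> length A = length B \<Longrightarrow> A \<noteq> [] \<Longrightarrow>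
  length x1 = n1 \<Longrightarrow> length x2 = n2 \<Longrightarrow>
  realize (ptail n1 n2 A B) (x1 @ x2) = map2 (+) (realize A x1) (realize B x2)"
proof (induction n1 n2 A B arbitrary: x1 x2 rule: ptail.induct)
  case (1 n1 n2 L1 A L2 B)
  show ?case
  proof (cases "A = []")
    case True
    then show ?thesis using 1 by (simp add: realize_Cons' aff_joinL)
  next
    case False
    then have "B \<noteq> []" using 1 by auto
    have ne: "ptail (length (snd L1)) (length (snd L2)) A B \<noteq> []"
      using False \<open>B \<noteq> []\<close> by (cases A; cases B) auto
    have "realize (ptail n1 n2 (L1 # A) (L2 # B)) (x1 @ x2) =
        realize (ptail (length (snd L1)) (length (snd L2)) A B) (relu (aff L1 x1) @ relu (aff L2 x2))"
      using False ne 1(2-) by (simp add: realize_Cons' aff_bdiag relu_append)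
    also have "\<dots> = map2 (+) (realize A (relu (aff L1 x1))) (realize B (relu (aff L2 x2)))"
      using 1 False by (intro 1(1)) (auto simp: length_aff)
    finally show ?thesis using False \<open>B \<noteq> []\<close> by (simp add: realize_Cons')
  qed
qed auto

lemma lens_ptail: "length A = length B \<Longrightarrow> lens (ptail n1 n2 A B) = plens (lens A) (lens B)"
  by (induction n1 n2 A B rule: ptail.induct) (auto simp: joinL_def bdiag_def)

lemma lens_psum: "length A = length B \<Longrightarrow> 2 \<le> length A \<Longrightarrow> lens (psum A B) = plens (lens A) (lens B)"
  apply (cases A; cases B)
  by (auto simp: lens_ptail stackL_def)

lemma plens_set: "x \<in> set (plens as bs) \<Longrightarrow> \<exists>a\<in>set as. \<exists>b\<in>set bs. min a b \<le> x \<and> x \<le> a + b"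
  by (induction as bs rule: plens.induct) (auto split: if_splits)

lemma plens_last: "length as = length bs \<Longrightarrow> as \<noteq> [] \<Longrightarrow> last (plens as bs) = min (last as) (last bs)"
proof (induction as bs rule: plens.induct)
  case (1 a as b bs)
  then show ?case by (cases as; cases bs) auto
qed auto

lemma plens_length: "length as = length bs \<Longrightarrow> length (plens as bs) = length as"
  by (induction as bs rule: plens.induct) auto

lemma plens_ne: "length as = length bs \<Longrightarrow> as \<noteq> [] \<Longrightarrow> plens as bs \<noteq> []"
  by (cases as; cases bs) auto

definition ok :: "nat \<Rightarrow> nat \<Rightarrow> net \<Rightarrow> bool" where
  "ok n k A \<longleftrightarrow> A \<noteq> [] \<and> chain n A \<and> last (lens A) = k \<and> (\<forall>x\<in>set (lens A). 1 \<le> x)"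

lemma ok_psum: "ok n k A \<Longrightarrow> ok n k B \<Longrightarrow> length A = length B \<Longrightarrow> 2 \<le> length A \<Longrightarrow>
  ok n k (psum A B) \<and> length (psum A B) = length A \<and>
  (\<forall>x. length x = n \<longrightarrow> realize (psum A B) x = map2 (+) (realize A x) (realize B x))"
proof -
  assume a: "ok n k A" "ok n k B" "length A = length B" "2 \<le> length A"
  obtain L1 A' where A: "A = L1 # A'" using a by (cases A) auto
  obtain L2 B' where B: "B = L2 # B'" using a by (cases B) auto
  have A'ne: "A' \<noteq> []" "B' \<noteq> []" using a A B by auto
  have c1: "chain n A" "chain n B" using a by (auto simp: ok_def)
  have ch: "chain n (psum A B)"
    using c1 a(3) chain_ptail[of "length (snd L1)" A' "length (snd L2)" B'] by (auto simp: A B stackL_def)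
  have ln: "lens (psum A B) = plens (lens A) (lens B)" using lens_psum a by simp
  have pos: "\<forall>x\<in>set (lens (psum A B)). 1 \<le> x"
  proof
    fix x assume "x \<in> set (lens (psum A B))"
    then obtain p q where "p \<in> set (lens A)" "q \<in> set (lens B)" "min p q \<le> x"
      using plens_set ln by fastforce
    moreover have "1 \<le> p" "1 \<le> q" using a \<open>p \<in> set (lens A)\<close> \<open>q \<in> set (lens B)\<close> by (auto simp: ok_def)
    ultimately show "1 \<le> x" by linarith
  qed
  have lst: "last (lens (psum A B)) = k" using ln plens_last[of "lens A" "lens B"] a
    by (auto simp: ok_def A)
  have ne: "psum A B \<noteq> []" by (simp add: A B)
  have len: "length (psum A B) = length A"
    using ln plens_length[of "lens A" "lens B"] a by (metis lens_simps(4))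
  have sem: "realize (psum A B) x = map2 (+) (realize A x) (realize B x)" if "length x = n" for x
  proof -
    have ne2: "ptail (length (snd L1)) (length (snd L2)) A' B' \<noteq> []"
      using A'ne by (cases A'; cases B') auto
    have "realize (psum A B) x = realize (ptail (length (snd L1)) (length (snd L2)) A' B') (relu (aff L1 x) @ relu (aff L2 x))"
      using ne2 c1 by (simp add: A B realize_Cons' aff_stack relu_append)
    also have "\<dots> = map2 (+) (realize A' (relu (aff L1 x))) (realize B' (relu (aff L2 x)))"
      using c1 a(3) A'ne by (intro realize_ptail) (auto simp: A B length_aff)
    finally show ?thesis using A'ne by (simp add: A B realize_Cons')
  qed
  show ?thesis using ch pos lst ne len sem by (simp add: ok_def)
qed

definition padTo :: "nat \<Rightarrow> net \<Rightarrow> net" where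
  "padTo l A = (if length A < l then pad A (l - length A) else A)"

definition psumP :: "net \<Rightarrow> net \<Rightarrow> net" where
  "psumP A B = (let l = max (length A) (length B) in psum (padTo l A) (padTo l B))"

definition lpad :: "nat \<Rightarrow> nat list \<Rightarrow> nat list" where
  "lpad l as = (if length as < l then butlast as @ replicate (l - length as) (2 * last as) @ [last as] else as)"

definition lpsumP :: "nat list \<Rightarrow> nat list \<Rightarrow> nat list" where
  "lpsumP as bs = (let l = max (length as) (length bs) in plens (lpad l as) (lpad l bs))"

lemma ok_padTo: "ok n k A \<Longrightarrow> ok n k (padTo l A) \<and> length (padTo l A) = max (length A) l \<and>
   (\<forall>x. realize (padTo l A) x = realize A x) \<and> lens (padTo l A) = lpad l (lens A)"
proof (cases "length A < l")
  case True
  assume a: "ok n k A"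
  have ne: "A \<noteq> []" and c: "chain n A" and k: "last (lens A) = k" and pos: "\<forall>x\<in>set (lens A). 1 \<le> x"
    using a by (auto simp: ok_def)
  have k1: "1 \<le> k" using pos k ne by (metis last_in_set lens_simps(5))
  have j: "1 \<le> l - length A" using True by simp
  have lp: "lens (pad A (l - length A)) = butlast (lens A) @ replicate (l - length A) (2 * k) @ [k]"
    using lens_pad[OF ne j] k by simp
  have "length (pad A (l - length A)) \<noteq> 0" using length_pad[OF ne j] True by simp
  then have "pad A (l - length A) \<noteq> []" by (metis list.size(3))
  then have "ok n k (pad A (l - length A))"
    unfolding ok_def using chain_pad[OF c ne] lp pos k1
    by (auto dest: in_set_butlastD)
  then show ?thesis using True realize_pad[OF c ne j] length_pad[OF ne j] lens_pad[OF ne j]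
    by (simp add: padTo_def lpad_def)
next
  case False
  assume "ok n k A"
  then show ?thesis using False by (simp add: padTo_def lpad_def)
qed

lemma ok_psumP: "ok n k A \<Longrightarrow> ok n k B \<Longrightarrow> 2 \<le> max (length A) (length B) \<Longrightarrow>
  ok n k (psumP A B) \<and> length (psumP A B) = max (length A) (length B) \<and>
  (\<forall>x. length x = n \<longrightarrow> realize (psumP A B) x = map2 (+) (realize A x) (realize B x)) \<and>
  lens (psumP A B) = lpsumP (lens A) (lens B)"
proof -
  assume a: "ok n k A" "ok n k B" "2 \<le> max (length A) (length B)"
  define l where "l = max (length A) (length B)"
  note pA = ok_padTo[OF a(1), of l] and pB = ok_padTo[OF a(2), of l]
  have "length (padTo l A) = l" "length (padTo l B) = l" using pA pB by (auto simp: l_def)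
  note ps = ok_psum[OF pA[THEN conjunct1] pB[THEN conjunct1]] 
  show ?thesis using ps pA pB a(3) lens_psum[of "padTo l A" "padTo l B"] \<open>length (padTo l A) = l\<close> \<open>length (padTo l B) = l\<close>
    unfolding psumP_def lpsumP_def l_def[symmetric] by (simp add: Let_def l_def)
qed

definition Id1 :: "nat \<Rightarrow> net" where
  "Id1 n = [(idm n, zeros n)]"

lemma ok_Id1: "1 \<le> n \<Longrightarrow> ok n n (Id1 n)"
  by (auto simp: ok_def Id1_def idm_def)

lemma realize_Id1: "length x = n \<Longrightarrow> realize (Id1 n) x = x"
  by (simp add: Id1_def aff_id realize_Cons')

lemma ok_fold: "ok n n A \<Longrightarrow> \<forall>N\<in>set Ns. ok n n N \<and> 2 \<le> length N \<Longrightarrow>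
  ok n n (foldl psumP A Ns) \<and> length (foldl psumP A Ns) = foldl max (length A) (map length Ns) \<and>
  (\<forall>x. length x = n \<longrightarrow> realize (foldl psumP A Ns) x = foldl (\<lambda>a N. map2 (+) a (realize N x)) (realize A x) Ns) \<and>
  lens (foldl psumP A Ns) = foldl lpsumP (lens A) (map lens Ns)"
proof (induction Ns arbitrary: A)
  case Nil then show ?case by simp
next
  case (Cons N Ns)
  have "2 \<le> max (length A) (length N)" using Cons by auto
  note p = ok_psumP[OF Cons(2) _ this]
  show ?case using Cons(1)[of "psumP A N"] p Cons(2,3) by auto
qed

lemma bound_fold: "ok d d A \<Longrightarrow> \<forall>x\<in>set (lens A). x \<le> 2 * d + S \<Longrightarrow>
  \<forall>N\<in>set Ns. ok d d N \<and> 2 \<le> length N \<and> length A \<le> length N \<Longrightarrow> sorted (map length Ns) \<Longrightarrow>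
  \<forall>x\<in>set (lens (foldl psumP A Ns)). x \<le> 2 * d + S + sum_list (map (\<lambda>N. Max (set (lens N))) Ns)"
proof (induction Ns arbitrary: A S)
  case Nil then show ?case by simp
next
  case (Cons N Ns)
  have oN: "ok d d N" "2 \<le> length N" "length A \<le> length N" using Cons(4) by auto
  have mx: "2 \<le> max (length A) (length N)" using oN by auto
  note p = ok_psumP[OF Cons(2) oN(1) mx]
  define M where "M = Max (set (lens N))"
  have lA: "last (lens A) = d" "A \<noteq> []" using Cons(2) by (auto simp: ok_def)
  have b1: "\<forall>x\<in>set (lpad (length N) (lens A)). x \<le> 2 * d + S"
    using Cons(3) lA by (auto simp: lpad_def dest: in_set_butlastD)
  have b2: "\<forall>x\<in>set (lens N). x \<le> M" unfolding M_def by auto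
  have e: "lens (psumP A N) = plens (lpad (length N) (lens A)) (lens N)"
    using p oN(3) by (simp add: lpsumP_def lpad_def max_def)
  have b: "\<forall>x\<in>set (lens (psumP A N)). x \<le> 2 * d + (S + M)"
  proof
    fix x assume "x \<in> set (lens (psumP A N))"
    then obtain a b where "a \<in> set (lpad (length N) (lens A))" "b \<in> set (lens N)" "x \<le> a + b"
      using plens_set e by fastforce
    then show "x \<le> 2 * d + (S + M)" using b1 b2 by fastforce
  qed
  have len: "length (psumP A N) = length N" using p oN by simp
  have "\<forall>N'\<in>set Ns. ok d d N' \<and> 2 \<le> length N' \<and> length (psumP A N) \<le> length N'"
    using Cons(4,5) len by auto
  from Cons(1)[OF p[THEN conjunct1] b this] Cons(5)
  show ?case by (simp add: M_def add.assoc)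
qed

definition preL :: "layer \<Rightarrow> layer" where
  "preL L = (map (\<lambda>r. r @ negl r) (fst L), snd L)"
definition preNeg :: "net \<Rightarrow> net" where
  "preNeg A = (case A of [] \<Rightarrow> [] | L # A' \<Rightarrow> preL L # A')"

lemma aff_preL: "\<forall>r\<in>set (fst L). length r = length y \<Longrightarrow> aff (preL L) (relu y @ relu (negl y)) = aff L y"
proof -
  assume a: "\<forall>r\<in>set (fst L). length r = length y"
  have "dot (r @ negl r) (relu y @ relu (negl y)) = dot r y" if "r \<in> set (fst L)" for r
    using a that by (simp add: dot_append dot_neg dot_diff relu_diff)
  then have m: "map (\<lambda>r. dot (r @ negl r) (relu y @ relu (negl y))) (fst L) = map (\<lambda>r. dot r y) (fst L)"
    by (intro map_cong) auto
  show ?thesis unfolding aff_def preL_def mv_dot fst_conv snd_conv map_map o_def m ..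
qed

lemma realize_preNeg: "chain n A \<Longrightarrow> A \<noteq> [] \<Longrightarrow> length y = n \<Longrightarrow>
  realize (preNeg A) (relu y @ relu (negl y)) = realize A y"
  by (cases A) (auto simp: preNeg_def realize_Cons' aff_preL)

lemma chain_preNeg: "chain n A \<Longrightarrow> chain (2 * n) (preNeg A)"
  by (cases A) (auto simp: preNeg_def preL_def)

lemma lens_preNeg[simp]: "lens (preNeg A) = lens A"
  by (cases A) (auto simp: preNeg_def preL_def)

lemma length_preNeg[simp]: "length (preNeg A) = length A"
  by (cases A) (auto simp: preNeg_def)

lemma length_postNeg[simp]: "A \<noteq> [] \<Longrightarrow> length (postNeg A) = length A"
  by (simp add: postNeg_def)

definition scaleN :: "real \<Rightarrow> net \<Rightarrow> net" where
  "scaleN c A = butlast A @ [(map (map ((*) c)) (fst (last A)), map ((*) c) (snd (last A)))]"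

lemma aff_scale: "aff (map (map ((*) c)) (fst L), map ((*) c) (snd L)) z = map ((*) c) (aff L z)"
  by (auto simp: aff_def mv_dot dot_scale[unfolded dot_def] dot_def distrib_left intro!: nth_equalityI)

lemma realize_scaleN: "A \<noteq> [] \<Longrightarrow> realize (scaleN c A) x = map ((*) c) (realize A x)"
proof -
  assume a: "A \<noteq> []"
  have e: "A = butlast A @ [last A]" using a by simp
  have "realize A x = aff (last A) (if butlast A = [] then x else relu (realize (butlast A) x))"
    by (subst e, subst realize_snoc) simp
  then show ?thesis unfolding scaleN_def realize_snoc aff_scale by simp
qed

lemma lens_scaleN: "A \<noteq> [] \<Longrightarrow> lens (scaleN c A) = lens A"
proof -
  assume a: "A \<noteq> []"
  have e: "A = butlast A @ [last A]" using a by simp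
  show ?thesis unfolding scaleN_def by (subst (3) e) (simp add: lens_def)
qed

lemma chain_scaleN: "chain n A \<Longrightarrow> A \<noteq> [] \<Longrightarrow> chain n (scaleN c A)"
proof -
  assume a: "chain n A" "A \<noteq> []"
  have e: "A = butlast A @ [last A]" using a by simp
  have "chain n (butlast A @ [last A])" using a e by simp
  then show ?thesis unfolding scaleN_def chain_append by auto
qed

lemma length_scaleN: "A \<noteq> [] \<Longrightarrow> length (scaleN c A) = length A"
  by (simp add: scaleN_def)

lemma ok_scaleN: "ok n k A \<Longrightarrow> ok n k (scaleN c A)"
  unfolding ok_def using lens_scaleN chain_scaleN by (auto simp: scaleN_def)

lemma chain_iff: "chain n A \<longleftrightarrow> (\<forall>m<length A. length (fst (A!m)) = (n # lens A) ! Suc m \<and>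
    (\<forall>row\<in>set (fst (A!m)). length row = (n # lens A) ! m))"
proof (induction A arbitrary: n)
  case Nil then show ?case by simp
next
  case (Cons L A)
  show ?case
    unfolding chain.simps Cons.IH by (auto simp: less_Suc_eq_0_disj)
qed

lemma dims_lens: "A \<noteq> [] \<Longrightarrow> dims A = length (hd (fst (hd A))) # lens A"
  by (cases A) (auto simp: dims_def lens_def case_prod_beta)

lemma wfI: "chain n A \<Longrightarrow> 2 \<le> length A \<Longrightarrow> 1 \<le> n \<Longrightarrow> \<forall>x\<in>set (lens A). 1 \<le> x \<Longrightarrow>
  wf_net A \<and> dims A = n # lens A"
proof -
  assume a: "chain n A" "2 \<le> length A" "1 \<le> n" "\<forall>x\<in>set (lens A). 1 \<le> x"
  obtain L A' where A: "A = L # A'" using a by (cases A) auto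
  have "1 \<le> length (snd L)" using a A by auto
  then have "fst L \<noteq> []" using a A by auto
  then have "length (hd (fst L)) = n" using a A by auto
  then have d: "dims A = n # lens A" using dims_lens[of A] A by simp
  show ?thesis unfolding wf_net_def d using a chain_iff[of n A] by auto
qed

lemma wfD: "wf_net A \<Longrightarrow> chain (hd (dims A)) A \<and> dims A = hd (dims A) # lens A \<and> 2 \<le> length A \<and>
   (\<forall>x\<in>set (lens A). 1 \<le> x) \<and> 1 \<le> hd (dims A)"
proof -
  assume a: "wf_net A"
  then have ne: "A \<noteq> []" by (auto simp: wf_net_def)
  have d: "dims A = hd (dims A) # lens A" using dims_lens[OF ne] by simp
  have "chain (hd (dims A)) A" using a chain_iff[of "hd (dims A)" A] d unfolding wf_net_def
    by metis
  then show ?thesis using a d unfolding wf_net_def by (metis list.set_intros)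
qed

definition blk :: "nat \<Rightarrow> (nat \<Rightarrow> net) \<Rightarrow> nat \<Rightarrow> net" where
  "blk K mk i = (if i = 0 then (\<lambda>A. A) else preNeg) ((if i = K - 1 then (\<lambda>A. A) else postNeg) (mk i))"
definition NetK :: "nat \<Rightarrow> (nat \<Rightarrow> net) \<Rightarrow> net" where
  "NetK K mk = concat (map (blk K mk) [0..<K])"

lemma net_main:
  assumes K: "1 \<le> K" and mk: "\<forall>i<K. ok d d (mk i) \<and> length (mk i) = l" and x: "length x = d"
  shows "1 \<le> m \<Longrightarrow> m \<le> K \<Longrightarrow>
    concat (map (blk K mk) [0..<m]) \<noteq> [] \<and> chain d (concat (map (blk K mk) [0..<m])) \<and>
    last (lens (concat (map (blk K mk) [0..<m]))) = (if m = K then d else 2 * d) \<and>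
    realize (concat (map (blk K mk) [0..<m])) x =
      (if m = K then foldl (\<lambda>y i. realize (mk i) y) x [0..<m]
       else foldl (\<lambda>y i. realize (mk i) y) x [0..<m] @ negl (foldl (\<lambda>y i. realize (mk i) y) x [0..<m])) \<and>
    length (foldl (\<lambda>y i. realize (mk i) y) x [0..<m]) = d \<and>
    length (concat (map (blk K mk) [0..<m])) = m * l"
proof (induction m)
  case 0 then show ?case by simp
next
  case (Suc m)
  have okm: "ok d d (mk m)" "length (mk m) = l" using mk Suc by auto
  then have cm: "chain d (mk m)" "mk m \<noteq> []" "last (lens (mk m)) = d" by (auto simp: ok_def)
  have lr: "length (realize (mk m) y) = d" for y using length_realize[OF cm(1,2)] cm(3) by simp
  define inner where "inner = (if m = K - 1 then mk m else postNeg (mk m))"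
  have inner_ne: "inner \<noteq> []" using cm by (auto simp: inner_def postNeg_def)
  have inner_ch: "chain d inner" using cm chain_postNeg by (auto simp: inner_def)
  have inner_last: "last (lens inner) = (if Suc m = K then d else 2 * d)"
    using cm Suc.prems by (auto simp: inner_def lens_postNeg)
  have inner_len: "length inner = l" using okm cm by (auto simp: inner_def)
  have inner_sem: "realize inner y = (if Suc m = K then realize (mk m) y else realize (mk m) y @ negl (realize (mk m) y))" for y
    using cm Suc.prems realize_postNeg[OF cm(2,1)] by (auto simp: inner_def)
  show ?case
  proof (cases m)
    case 0
    have b: "concat (map (blk K mk) [0..<Suc m]) = inner" using 0 by (simp add: blk_def inner_def)
    have f: "foldl (\<lambda>y i. realize (mk i) y) x [0..<Suc m] = realize (mk m) x" using 0 by simp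
    show ?thesis unfolding b f using inner_ne inner_ch inner_last inner_sem inner_len lr 0 by simp
  next
    case (Suc m')
    then have IH: "concat (map (blk K mk) [0..<m]) \<noteq> [] \<and> chain d (concat (map (blk K mk) [0..<m])) \<and>
      last (lens (concat (map (blk K mk) [0..<m]))) = 2 * d \<and>
      realize (concat (map (blk K mk) [0..<m])) x =
        foldl (\<lambda>y i. realize (mk i) y) x [0..<m] @ negl (foldl (\<lambda>y i. realize (mk i) y) x [0..<m]) \<and>
      length (foldl (\<lambda>y i. realize (mk i) y) x [0..<m]) = d \<and>
      length (concat (map (blk K mk) [0..<m])) = m * l"
      using Suc.IH Suc.prems by auto
    define Q where "Q = concat (map (blk K mk) [0..<m])"
    define Y where "Y = foldl (\<lambda>y i. realize (mk i) y) x [0..<m]"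
    have bm: "blk K mk m = preNeg inner" using Suc by (simp add: blk_def inner_def)
    have e: "concat (map (blk K mk) [0..<Suc m]) = Q @ preNeg inner" by (simp add: Q_def bm)
    have pne: "preNeg inner \<noteq> []" using inner_ne by (cases inner) (auto simp: preNeg_def)
    have IHQ: "Q \<noteq> [] \<and> chain d Q \<and> last (lens Q) = 2 * d \<and> realize Q x = Y @ negl Y \<and>
      length Y = d \<and> length Q = m * l" using IH unfolding Q_def Y_def .
    have lQ: "last (d # lens Q) = 2 * d" using IHQ by simp
    have ch: "chain d (Q @ preNeg inner)" unfolding chain_append lQ using IHQ chain_preNeg[OF inner_ch]
      by simp
    have sem: "realize (Q @ preNeg inner) x = realize inner Y"
      using IHQ pne realize_preNeg[OF inner_ch inner_ne, of Y]
      by (simp add: realize_append relu_append)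
    have fy: "foldl (\<lambda>y i. realize (mk i) y) x [0..<Suc m] = realize (mk m) Y" by (simp add: Y_def)
    have "lens inner \<noteq> []" using inner_ne by simp
    then show ?thesis unfolding e fy using IHQ ch sem inner_sem inner_last inner_len pne lr
      by simp
  qed
qed

lemma lens_blk: "mk i \<noteq> [] \<Longrightarrow> lens (blk K mk i) =
    (if i = K - 1 then lens (mk i) else butlast (lens (mk i)) @ [2 * last (lens (mk i))])"
  by (cases "i = 0"; simp add: blk_def lens_postNeg)

lemma lens_NetK: "lens (NetK K mk) = concat (map (\<lambda>i. lens (blk K mk i)) [0..<K])"
  by (simp add: NetK_def lens_def map_concat o_def)

lemma idx_props: "distinct (idx :: 'a::finite list) \<and> set (idx :: 'a list) = UNIV"
proof -
  obtain xs :: "'a list" where "set xs = UNIV \<and> distinct xs" using finite_distinct_list[of "UNIV :: 'a set"] by auto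
  then have "\<exists>xs :: 'a list. distinct xs \<and> set xs = UNIV" by blast
  then show ?thesis unfolding idx_def by (rule someI_ex)
qed

lemma length_idx: "length (idx :: 'a::finite list) = CARD('a)"
  using idx_props[where 'a='a] distinct_card by fastforce

lemma length_vlist[simp]: "length (vlist (y :: real^'d)) = CARD('d)"
  by (simp add: vlist_def length_idx)

lemma vlist_add: "map2 (+) (vlist a) (vlist b) = vlist (a + b :: real^'d)"
  by (auto simp: vlist_def intro!: nth_equalityI)

lemma vlist_scale: "map ((*) c) (vlist a) = vlist (c *\<^sub>R a :: real^'d)"
  by (auto simp: vlist_def intro!: nth_equalityI)

definition ix :: "'d::finite \<Rightarrow> nat" where
  "ix i = (THE n. n < length (idx :: 'd list) \<and> idx ! n = i)"

lemma ix_props: "ix i < CARD('d) \<and> (idx :: 'd::finite list) ! ix i = i"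
proof -
  have d: "distinct (idx :: 'd list)" and s: "set (idx :: 'd list) = UNIV" using idx_props by auto
  have ex: "\<exists>!n. n < length (idx :: 'd list) \<and> idx ! n = i"
  proof -
    obtain n where "n < length (idx :: 'd list)" "idx ! n = i" using s by (metis UNIV_I in_set_conv_nth)
    moreover have "m = n" if "m < length (idx :: 'd list)" "idx ! m = i" for m
      using d that \<open>n < _\<close> \<open>idx ! n = i\<close> nth_eq_iff_index_eq by metis
    ultimately show ?thesis by blast
  qed
  show ?thesis unfolding ix_def using theI'[OF ex] length_idx[where 'a='d] by auto
qed

lemma listv_eq: "listv zs = (\<chi> i. zs ! ix i)"
  by (simp add: listv_def ix_def)

lemma listv_vlist: "listv (vlist (y :: real^'d)) = y"
  unfolding listv_eq vlist_def using ix_props[where 'd='d] length_idx[where 'a='d]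
  by (simp add: vec_eq_iff)

lemma realize_cont:
  fixes h :: "'x::topological_space \<Rightarrow> real list"
  shows "chain m A \<Longrightarrow> A \<noteq> [] \<Longrightarrow> (\<forall>x. length (h x) = m) \<Longrightarrow> (\<forall>i<m. continuous_on UNIV (\<lambda>x. h x ! i)) \<Longrightarrow>
    \<forall>i<last (lens A). continuous_on UNIV (\<lambda>x. realize A (h x) ! i)"
proof (induction A arbitrary: h m)
  case Nil then show ?case by simp
next
  case (Cons L A)
  have lw: "length (fst L) = length (snd L)" and rows: "\<forall>r\<in>set (fst L). length r = m" using Cons by auto
  have affc: "continuous_on UNIV (\<lambda>x. aff L (h x) ! i)" if i: "i < length (snd L)" for i
  proof -
    have r: "length (fst L ! i) = m" using rows lw i by auto
    have "aff L (h x) ! i = (\<Sum>j<m. (fst L ! i) ! j * h x ! j) + snd L ! i" for x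
      using i lw r Cons.prems(3) by (simp add: aff_def mv_dot dot_nth)
    moreover have "continuous_on UNIV (\<lambda>x. (\<Sum>j<m. (fst L ! i) ! j * h x ! j) + snd L ! i)"
      using Cons.prems(4) by (intro continuous_intros) auto
    ultimately show ?thesis by simp
  qed
  have la: "length (aff L z) = length (snd L)" for z using lw by (simp add: length_aff)
  show ?case
  proof (cases "A = []")
    case True
    then show ?thesis using affc by (simp add: realize_Cons')
  next
    case False
    have "\<forall>i<last (lens A). continuous_on UNIV (\<lambda>x. realize A (relu (aff L (h x))) ! i)"
    proof (rule Cons.IH)
      show "chain (length (snd L)) A" using Cons by auto
      show "A \<noteq> []" by fact
      show "\<forall>x. length (relu (aff L (h x))) = length (snd L)" using la by simp
      show "\<forall>i<length (snd L). continuous_on UNIV (\<lambda>x. relu (aff L (h x)) ! i)"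
      proof (intro allI impI)
        fix i assume i: "i < length (snd L)"
        have "relu (aff L (h x)) ! i = max 0 (aff L (h x) ! i)" for x using la i by (simp add: relu_def)
        moreover have "continuous_on UNIV (\<lambda>x. max 0 (aff L (h x) ! i))"
          using affc[OF i] by (intro continuous_intros) auto
        ultimately show "continuous_on UNIV (\<lambda>x. relu (aff L (h x)) ! i)" by simp
      qed
    qed
    then show ?thesis using False by (simp add: realize_Cons')
  qed
qed

lemma listv_cont:
  assumes "chain CARD('d) A" "A \<noteq> []" "last (lens A) = CARD('d)"
  shows "continuous_on UNIV (\<lambda>x::real^'d. (listv (realize A (vlist x)) :: real^'d))"
proof -
  have c: "\<forall>i<CARD('d). continuous_on UNIV (\<lambda>x::real^'d. realize A (vlist x) ! i)"
  proof (rule realize_cont[OF assms(1,2), unfolded assms(3)])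
    show "\<forall>x::real^'d. length (vlist x) = CARD('d)" by simp
    show "\<forall>i<CARD('d). continuous_on UNIV (\<lambda>x::real^'d. vlist x ! i)"
      by (auto simp: vlist_def length_idx intro!: continuous_intros)
  qed
  show ?thesis unfolding listv_eq
    by (intro continuous_on_vec_lambda) (use c ix_props in auto)
qed

definition ordOf :: "net list \<Rightarrow> nat list" where
  "ordOf nets = sort_key (\<lambda>i. map length nets ! i) [0..<length nets]"
definition stepN :: "nat \<Rightarrow> net list \<Rightarrow> net" where
  "stepN d nets = foldl psumP (Id1 d) (map ((!) nets) (ordOf nets))"

lemma foldl_max: "foldl max (a::'a::linorder) xs = Max (insert a (set xs))"
proof -
  have e: "(\<lambda>x s. max s x) = (max :: 'a \<Rightarrow> _)" by (auto simp: fun_eq_iff max.commute)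
  have m: "Max (set (a # xs)) = fold max xs a" by (rule Max.set_eq_fold)
  have "foldl max a xs = Max (set (a # xs))" by (simp only: foldl_conv_fold e m)
  then show ?thesis by simp
qed

lemma ordOf_mset: "mset (ordOf nets) = mset [0..<length nets]"
  by (simp add: ordOf_def)

lemma ordOf_set: "set (ordOf nets) = {0..<length nets}"
  by (metis ordOf_mset set_mset_mset set_upt)

lemma sum_perm: "sum_list (map (g :: net \<Rightarrow> 'b::comm_monoid_add) (map ((!) nets) (ordOf nets))) = sum_list (map g nets)"
proof -
  have "mset (map ((!) nets) (ordOf nets)) = mset (map ((!) nets) [0..<length nets])"
    by (simp add: ordOf_mset)
  also have "map ((!) nets) [0..<length nets] = nets" by (rule map_nth)
  finally have E: "mset (map ((!) nets) (ordOf nets)) = mset nets" .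
  have "mset (map g (map ((!) nets) (ordOf nets))) = image_mset g (mset (map ((!) nets) (ordOf nets)))"
    by (rule mset_map)
  also have "\<dots> = image_mset g (mset nets)" by (simp only: E)
  also have "\<dots> = mset (map g nets)" by (rule mset_map[symmetric])
  finally have M: "mset (map g (map ((!) nets) (ordOf nets))) = mset (map g nets)" .
  have "sum_list (map g (map ((!) nets) (ordOf nets))) = sum_mset (mset (map g (map ((!) nets) (ordOf nets))))"
    by (simp only: sum_mset_sum_list)
  also have "\<dots> = sum_mset (mset (map g nets))" by (simp only: M)
  also have "\<dots> = sum_list (map g nets)" by (simp only: sum_mset_sum_list)
  finally show ?thesis .
qed

lemma sum_perm_idx: "sum_list (map (f :: nat \<Rightarrow> 'b::comm_monoid_add) (ordOf nets)) = sum_list (map f [0..<length nets])"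
proof -
  have M: "mset (map f (ordOf nets)) = mset (map f [0..<length nets])"
    by (simp only: mset_map ordOf_mset)
  have "sum_list (map f (ordOf nets)) = sum_mset (mset (map f (ordOf nets)))" by (simp only: sum_mset_sum_list)
  also have "\<dots> = sum_mset (mset (map f [0..<length nets]))" by (simp only: M)
  also have "\<dots> = sum_list (map f [0..<length nets])" by (simp only: sum_mset_sum_list)
  finally show ?thesis .
qed

lemma step_props:
  assumes d: "1 \<le> d" and nets: "\<forall>N\<in>set nets. ok d d N \<and> 2 \<le> length N" and ne: "nets \<noteq> []"
  shows "ok d d (stepN d nets) \<and> length (stepN d nets) = Max (insert 1 (set (map length nets))) \<and>
    (\<forall>x. length x = d \<longrightarrow> realize (stepN d nets) x = foldl (\<lambda>a i. map2 (+) a (realize (nets ! i) x)) x (ordOf nets)) \<and>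
    (\<forall>z\<in>set (lens (stepN d nets)). z \<le> 2 * d + sum_list (map (\<lambda>N. Max (set (lens N))) nets)) \<and>
    lens (stepN d nets) = foldl lpsumP [d] (map (\<lambda>i. lens (nets ! i)) (ordOf nets))"
proof -
  define Ns where "Ns = map ((!) nets) (ordOf nets)"
  have "set Ns = set (map ((!) nets) [0..<length nets])" by (simp add: Ns_def ordOf_set)
  then have sNs: "set Ns = set nets" by (simp only: map_nth)
  have okN: "\<forall>N\<in>set Ns. ok d d N \<and> 2 \<le> length N" using nets sNs by auto
  note f = ok_fold[OF ok_Id1[OF d] okN]
  have len: "length (stepN d nets) = Max (insert 1 (set (map length nets)))"
    using f sNs by (simp add: stepN_def Ns_def[symmetric] foldl_max Id1_def)
  have "map length Ns = map (\<lambda>i. map length nets ! i) (ordOf nets)"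
    unfolding Ns_def using ordOf_set[of nets] by auto
  then have sorted: "sorted (map length Ns)" unfolding ordOf_def by (simp add: o_def)
  have b: "\<forall>z\<in>set (lens (stepN d nets)). z \<le> 2 * d + 0 + sum_list (map (\<lambda>N. Max (set (lens N))) Ns)"
    unfolding stepN_def Ns_def[symmetric]
    by (rule bound_fold[OF ok_Id1[OF d]]) (use okN sorted in \<open>auto simp: Id1_def zeros_def\<close>)
  have sm: "sum_list (map (\<lambda>N. Max (set (lens N))) Ns) = sum_list (map (\<lambda>N. Max (set (lens N))) nets)"
    unfolding Ns_def by (rule sum_perm)
  have r: "\<forall>x. length x = d \<longrightarrow> realize (stepN d nets) x = foldl (\<lambda>a i. map2 (+) a (realize (nets ! i) x)) x (ordOf nets)"
    using f by (simp add: stepN_def Ns_def realize_Id1 foldl_map)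
  have l: "lens (stepN d nets) = foldl lpsumP [d] (map (\<lambda>i. lens (nets ! i)) (ordOf nets))"
    using f by (simp add: stepN_def Ns_def Id1_def zeros_def o_def)
  have o: "ok d d (stepN d nets)" using f by (simp add: stepN_def Ns_def)
  show ?thesis using o len r b sm l by simp
qed

lemma foldl_vlist:
  "(\<forall>i\<in>set ord. realize (nets ! i) (vlist y) = vlist (h i y)) \<Longrightarrow>
   foldl (\<lambda>a i. map2 (+) a (realize (nets ! i) (vlist y))) (vlist (y0 :: real^'d)) ord
     = vlist (y0 + sum_list (map (\<lambda>i. h i y) ord))"
  by (induction ord arbitrary: y0) (auto simp: vlist_add add.assoc)

lemma sorted_less_idx: "sorted xs \<Longrightarrow> i < length xs \<Longrightarrow> j < length xs \<Longrightarrow> xs ! i < xs ! j \<Longrightarrow> i < j"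
  by (meson leI linorder_not_le sorted_nth_mono)

context
  fixes T :: real and K :: nat and t s :: real
  assumes T: "0 < T" and K: "0 < K" and t0: "0 \<le> t" and ts: "t < s" and sT: "s \<le> T"
begin

definition "GS r = {T * real k / real K | k. k \<le> K \<and> t < T * real k / real K \<and> T * real k / real K < r}"

lemma GS_fin: "finite (GS r)"
proof -
  have "GS r \<subseteq> (\<lambda>k. T * real k / real K) ` {..K}" by (auto simp: GS_def)
  then show ?thesis by (rule finite_subset) auto
qed

lemma part_eq: "part T K t r = sorted_list_of_set ({t, r} \<union> GS r)"
  by (simp add: part_def GS_def)

lemma GS_card: "card (GS s) \<le> K - 1"
proof -
  have "GS s \<subseteq> (\<lambda>k. T * real k / real K) ` {1..K-1}"
  proof
    fix y assume "y \<in> GS s"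
    then obtain k where k: "k \<le> K" "t < T * real k / real K" "T * real k / real K < s" "y = T * real k / real K"
      by (auto simp: GS_def)
    have "k \<noteq> 0"
    proof
      assume "k = 0" then show False using k t0 by simp
    qed
    moreover have "k \<noteq> K" using k sT K by auto
    ultimately show "y \<in> (\<lambda>k. T * real k / real K) ` {1..K-1}" using k by auto
  qed
  then have "card (GS s) \<le> card ((\<lambda>k. T * real k / real K) ` {1..K-1})" by (rule card_mono[rotated]) auto
  also have "\<dots> \<le> card {1..K-1}" by (rule card_image_le) auto
  finally show ?thesis by simp
qed

abbreviation "P \<equiv> part T K t s"

lemma P_basic: "sorted P" "distinct P" "set P = {t, s} \<union> GS s" "length P = card ({t, s} \<union> GS s)"
proof -
  have f: "finite ({t, s} \<union> GS s)" using GS_fin by simp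
  show "sorted P" unfolding part_eq by (rule sorted_sorted_list_of_set)
  show "distinct P" unfolding part_eq by (rule distinct_sorted_list_of_set)
  show "set P = {t, s} \<union> GS s" unfolding part_eq by (rule set_sorted_list_of_set[OF f])
  show "length P = card ({t, s} \<union> GS s)" unfolding part_eq by (rule length_sorted_list_of_set)
qed

lemma P_range: "y \<in> set P \<Longrightarrow> t \<le> y \<and> y \<le> s"
  using P_basic(3) ts by (auto simp: GS_def)

lemma P_len: "2 \<le> length P" "length P \<le> K + 1"
proof -
  have "card {t, s} = 2" using ts by auto
  then have "2 \<le> card ({t, s} \<union> GS s)" using card_mono[of "{t, s} \<union> GS s" "{t, s}"] GS_fin by auto
  then show "2 \<le> length P" using P_basic(4) by simp
  have "card ({t, s} \<union> GS s) \<le> card {t, s} + card (GS s)" by (rule card_Un_le)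
  also have "\<dots> \<le> 2 + (K - 1)" using GS_card \<open>card {t, s} = 2\<close> by simp
  finally show "length P \<le> K + 1" using P_basic(4) K by simp
qed

lemma P_first: "P ! 0 = t"
proof -
  have "t \<in> set P" using P_basic(3) by auto
  then obtain k where k: "k < length P" "P ! k = t" by (metis in_set_conv_nth)
  have "P ! 0 \<le> P ! k" using k P_basic(1) by (intro sorted_nth_mono) auto
  moreover have "0 < length P" using P_len(1) by linarith
  then have "P ! 0 \<in> set P" by (rule nth_mem)
  then have "t \<le> P ! 0" using P_range by auto
  ultimately show ?thesis using k by simp
qed

lemma P_last: "P ! (length P - 1) = s"
proof -
  have "s \<in> set P" using P_basic(3) by auto
  then obtain k where k: "k < length P" "P ! k = s" by (metis in_set_conv_nth)
  have "P ! k \<le> P ! (length P - 1)" using k P_basic(1) by (intro sorted_nth_mono) auto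
  moreover have "P ! (length P - 1) \<le> s" using P_range[of "P ! (length P - 1)"] P_len(1) by simp
  ultimately show ?thesis using k by simp
qed

lemma P_strict: "i < j \<Longrightarrow> j < length P \<Longrightarrow> P ! i < P ! j"
proof -
  assume a: "i < j" "j < length P"
  have "P ! i \<le> P ! j" using a P_basic(1) by (intro sorted_nth_mono) auto
  moreover have "P ! i \<noteq> P ! j" using a P_basic(2) nth_eq_iff_index_eq by fastforce
  ultimately show ?thesis by simp
qed

lemma P_between: "y \<in> set P \<Longrightarrow> Suc j < length P \<Longrightarrow> P ! j < y \<Longrightarrow> y < P ! Suc j \<Longrightarrow> False"
proof -
  assume a: "y \<in> set P" "Suc j < length P" "P ! j < y" "y < P ! Suc j"
  then obtain k where k: "k < length P" "P ! k = y" by (metis in_set_conv_nth)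
  have "j < k" using sorted_less_idx[OF P_basic(1), of j k] a k by auto
  moreover have "k < Suc j" using sorted_less_idx[OF P_basic(1), of k "Suc j"] a k by auto
  ultimately show False by simp
qed

lemma take_mem: "i \<le> j \<Longrightarrow> j < length P \<Longrightarrow> P ! i \<in> set (take (Suc j) P)"
proof -
  assume a: "i \<le> j" "j < length P"
  have "take (Suc j) P ! i \<in> set (take (Suc j) P)" using a by (intro nth_mem) simp
  then show ?thesis using a by simp
qed

lemma P_prefix: "j < length P \<Longrightarrow> part T K t (P ! j) = take (Suc j) P"
proof -
  assume j: "j < length P"
  have "{t, P ! j} \<union> GS (P ! j) = set (take (Suc j) P)"
  proof
    show "{t, P ! j} \<union> GS (P ! j) \<subseteq> set (take (Suc j) P)"
    proof
      fix y assume y: "y \<in> {t, P ! j} \<union> GS (P ! j)"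
      show "y \<in> set (take (Suc j) P)"
      proof (cases "y \<in> GS (P ! j)")
        case True
        then have y1: "t < y" "y < P ! j" and "y \<in> GS s"
          using P_range[of "P ! j"] j by (auto simp: GS_def)
        then have "y \<in> set P" using P_basic(3) by auto
        then obtain k where k: "k < length P" "P ! k = y" by (metis in_set_conv_nth)
        have "k < j" using sorted_less_idx[OF P_basic(1), of k j] y1 k j by auto
        then show ?thesis using k j take_mem[of k j] by auto
      next
        case False
        then have "y = P ! 0 \<or> y = P ! j" using y P_first by auto
        then show ?thesis using j take_mem[of 0 j] take_mem[of j j] by auto
      qed
    qed
  next
    show "set (take (Suc j) P) \<subseteq> {t, P ! j} \<union> GS (P ! j)"
    proof
      fix y assume "y \<in> set (take (Suc j) P)"
      then obtain i where i0: "i < length (take (Suc j) P)" "take (Suc j) P ! i = y" by (metis in_set_conv_nth)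
      then have i: "i \<le> j" "y = P ! i" using j by auto
      show "y \<in> {t, P ! j} \<union> GS (P ! j)"
      proof (cases "i = 0 \<or> i = j")
        case True then show ?thesis using i P_first by auto
      next
        case False
        then have "0 < i" "i < j" using i by auto
        then have lt: "t < y" "y < P ! j" using P_strict[of 0 i] P_strict[of i j] j i P_first by auto
        have "y \<in> set P" using i j by auto
        moreover have "y \<noteq> s" using lt P_range[of "P ! j"] j by auto
        ultimately have "y \<in> GS s" using lt P_basic(3) by auto
        then show ?thesis using lt by (auto simp: GS_def)
      qed
    qed
  qed
  moreover have "sorted (take (Suc j) P)" "distinct (take (Suc j) P)"
    using P_basic(1,2) by (auto simp: sorted_wrt_take)
  ultimately show ?thesis unfolding part_eq[of "P ! j"] by (metis sorted_list_of_set.idem_if_sorted_distinct)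
qed

lemma P_flr: "Suc j < length P \<Longrightarrow> P ! j < u \<Longrightarrow> u \<le> P ! Suc j \<Longrightarrow> max t (flr T K u) = P ! j"
proof -
  assume a: "Suc j < length P" "P ! j < u" "u \<le> P ! Suc j"
  define A where "A = {T * real k / real K | k. k \<le> K} \<inter> ({..<u} \<union> {0})"
  have fA: "finite A" unfolding A_def by auto
  have A0: "0 \<in> A" unfolding A_def by (auto intro: exI[of _ 0])
  have flr: "flr T K u = Max A" by (simp add: flr_def A_def)
  have bound: "g \<le> max t (P ! j)" if g: "g \<in> A" for g
  proof (rule ccontr)
    assume "\<not> g \<le> max t (P ! j)"
    then have g1: "t < g" "P ! j < g" by auto
    have "g \<noteq> 0" using g1 t0 by auto
    then obtain k where k: "k \<le> K" "g = T * real k / real K" "g < u" using g by (auto simp: A_def)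
    have "g < P ! Suc j" using k a by auto
    moreover have "P ! Suc j \<le> s" using P_range a by auto
    ultimately have "g \<in> GS s" using k g1 by (auto simp: GS_def)
    then have "g \<in> set P" using P_basic(3) by auto
    then show False using P_between[of g j] a g1 \<open>g < P ! Suc j\<close> by auto
  qed
  show ?thesis
  proof (cases j)
    case 0
    have b': "\<forall>g\<in>A. g \<le> t" using bound P_first 0 t0 by simp
    have "A \<noteq> {}" using A0 by auto
    then have "Max A \<le> t" using fA b' by (simp add: Max_le_iff)
    then show ?thesis using 0 P_first flr by simp
  next
    case (Suc j')
    have tj: "t < P ! j" using P_strict[of 0 j] a P_first Suc by auto
    have "P ! j \<in> set P" using a by auto
    moreover have "P ! j \<noteq> s" using P_strict[of j "Suc j"] a P_range[of "P ! Suc j"] by auto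
    ultimately have "P ! j \<in> GS s" using tj P_basic(3) by auto
    then obtain k where "k \<le> K" "P ! j = T * real k / real K" by (auto simp: GS_def)
    then have "P ! j \<in> A" using a by (auto simp: A_def)
    then have "Max A = P ! j" using bound tj fA by (intro Max_eqI) auto
    then show ?thesis using tj flr by simp
  qed
qed


lemma P_integral: "j < length P \<Longrightarrow>
  ((\<lambda>u. h (max t (flr T K u)) :: 'a::banach) has_integral (\<Sum>i<j. (P ! Suc i - P ! i) *\<^sub>R h (P ! i))) {t..P ! j}"
proof (induction j)
  case 0
  have "{t..P ! 0} = {t}" using P_first by simp
  then show ?case by (simp add: has_integral_refl(2))
next
  case (Suc j)
  have lt: "P ! j < P ! Suc j" using P_strict Suc by auto
  have tj: "t \<le> P ! j" using P_range[of "P ! j"] Suc by auto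
  have c: "((\<lambda>u. h (P ! j)) has_integral (P ! Suc j - P ! j) *\<^sub>R h (P ! j)) {P ! j..P ! Suc j}"
    using has_integral_const_real[of "h (P ! j)" "P ! j" "P ! Suc j"] lt by simp
  have c2: "((\<lambda>u. h (max t (flr T K u))) has_integral (P ! Suc j - P ! j) *\<^sub>R h (P ! j)) {P ! j..P ! Suc j}"
    by (rule has_integral_spike_finite[OF _ _ c, of "{P ! j}"]) (use P_flr[of j] Suc in auto)
  show ?case using has_integral_combine[OF tj less_imp_le[OF lt] Suc.IH[OF Suc_lessD[OF Suc.prems]] c2]
    by (simp add: add.commute)
qed

lemma simple_int_snoc: "Suc j < length P \<Longrightarrow>
  simple_int (take (Suc (Suc j)) P) H Z = simple_int (take (Suc j) P) H Z + H (P ! Suc j) *v (Z (P ! Suc j) - Z (P ! j))"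
proof -
  assume a: "Suc j < length P"
  have "simple_int (take (Suc (Suc j)) P) H Z = (\<Sum>i<Suc j. H (P ! Suc i) *v (Z (P ! Suc i) - Z (P ! i)))"
    unfolding simple_int_def using a by (intro sum.cong) auto
  moreover have "simple_int (take (Suc j) P) H Z = (\<Sum>i<j. H (P ! Suc i) *v (Z (P ! Suc i) - Z (P ! i)))"
    unfolding simple_int_def using a by (intro sum.cong) auto
  ultimately show ?thesis by simp
qed

lemma X_iter:
  assumes E: "euler_eq T K b sg Fm Wp Jp t x X"
  shows "j < length P \<Longrightarrow> X (P ! j) = foldl (\<lambda>y i. y + (P ! Suc i - P ! i) *\<^sub>R b y + sg y *v (Wp (P ! Suc i) - Wp (P ! i))
     + Fm y *v (Jp (P ! Suc i) - Jp (P ! i))) x [0..<j]"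
proof -
  have eq: "X (P ! j) = x + (\<Sum>i<j. (P ! Suc i - P ! i) *\<^sub>R b (X (P ! i)))
      + simple_int (take (Suc j) P) (\<lambda>u. sg (X (max t (flr T K u)))) Wp
      + simple_int (take (Suc j) P) (\<lambda>u. Fm (X (max t (flr T K u)))) Jp" if j: "j < length P" for j
  proof -
    have r: "P ! j \<in> {t..T}" using P_range[of "P ! j"] j sT by auto
    have "integral {t..P ! j} (\<lambda>u. b (X (max t (flr T K u)))) = (\<Sum>i<j. (P ! Suc i - P ! i) *\<^sub>R b (X (P ! i)))"
      using P_integral[OF j, of "\<lambda>v. b (X v)"] by (rule integral_unique)
    then show ?thesis using E r P_prefix[OF j] unfolding euler_eq_def by auto
  qed
  have step: "X (P ! Suc j) = X (P ! j) + (P ! Suc j - P ! j) *\<^sub>R b (X (P ! j)) + sg (X (P ! j)) *v (Wp (P ! Suc j) - Wp (P ! j))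
     + Fm (X (P ! j)) *v (Jp (P ! Suc j) - Jp (P ! j))" if j: "Suc j < length P" for j
  proof -
    have fl: "max t (flr T K (P ! Suc j)) = P ! j" using P_flr[OF j] P_strict[of j "Suc j"] j by auto
    define Sb where "Sb = (\<Sum>i<j. (P ! Suc i - P ! i) *\<^sub>R b (X (P ! i)))"
    define SW where "SW = simple_int (take (Suc j) P) (\<lambda>u. sg (X (max t (flr T K u)))) Wp"
    define SJ where "SJ = simple_int (take (Suc j) P) (\<lambda>u. Fm (X (max t (flr T K u)))) Jp"
    define Y where "Y = X (P ! j)"
    have e1: "X (P ! Suc j) = x + (Sb + (P ! Suc j - P ! j) *\<^sub>R b Y) + (SW + sg Y *v (Wp (P ! Suc j) - Wp (P ! j)))
       + (SJ + Fm Y *v (Jp (P ! Suc j) - Jp (P ! j)))"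
      unfolding Sb_def SW_def SJ_def Y_def using eq[OF j] by (simp add: simple_int_snoc[OF j] fl)
    have e2: "Y = x + Sb + SW + SJ" unfolding Sb_def SW_def SJ_def Y_def using eq[of j] j by simp
    have alg: "\<And>v c a e. v = x + Sb + SW + SJ \<Longrightarrow> x + (Sb + c) + (SW + a) + (SJ + e) = v + c + a + e"
      by (simp add: algebra_simps)
    show ?thesis unfolding e1 Y_def[symmetric] by (rule alg[OF e2])
  qed
  show "j < length P \<Longrightarrow> ?thesis"
  proof (induction j)
    case 0
    then show ?case using eq[of 0] by (simp add: simple_int_def)
  next
    case (Suc j)
    then show ?case using step[OF Suc.prems] by simp
  qed
qed

end

lemma NetK_facts:
  assumes K: "1 \<le> K" and d: "1 \<le> d" and mk: "\<forall>i<K. ok d d (mk i) \<and> length (mk i) = l \<and> lens (mk i) = Ls"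
    and l: "2 \<le> l"
  shows "wf_net (NetK K mk) \<and>
    dims (NetK K mk) = d # concat (map (\<lambda>i. if i = K - 1 then Ls else butlast Ls @ [2 * last Ls]) [0..<K]) \<and>
    dims (NetK K mk) = d # lens (NetK K mk) \<and>
    chain d (NetK K mk) \<and> last (lens (NetK K mk)) = d \<and> NetK K mk \<noteq> [] \<and> length (NetK K mk) = K * l \<and>
    (\<forall>x. length x = d \<longrightarrow> realize (NetK K mk) x = foldl (\<lambda>y i. realize (mk i) y) x [0..<K])"
proof -
  have mk': "\<forall>i<K. ok d d (mk i) \<and> length (mk i) = l" using mk by auto
  note nm = net_main[OF K mk', of _ K, OF _ K order_refl, unfolded NetK_def[symmetric]]
  have nm0: "NetK K mk \<noteq> [] \<and> chain d (NetK K mk) \<and> last (lens (NetK K mk)) = d \<and> length (NetK K mk) = K * l"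
    using nm[of "replicate d 0"] by simp
  have sem: "\<forall>x. length x = d \<longrightarrow> realize (NetK K mk) x = foldl (\<lambda>y i. realize (mk i) y) x [0..<K]"
    using nm by simp
  have ne: "mk i \<noteq> []" if "i < K" for i using mk that by (auto simp: ok_def)
  have ln: "lens (NetK K mk) = concat (map (\<lambda>i. if i = K - 1 then Ls else butlast Ls @ [2 * last Ls]) [0..<K])"
    unfolding lens_NetK using mk ne lens_blk by (intro arg_cong[where f=concat] map_cong) auto
  have ok0: "ok d d (mk 0)" "lens (mk 0) = Ls" using mk K by auto
  have pos: "\<forall>x\<in>set Ls. 1 \<le> x" using ok0 by (auto simp: ok_def)
  have "Ls \<noteq> []" using ok0 by (auto simp: ok_def)
  then have "1 \<le> last Ls" using pos by auto
  then have pos2: "\<forall>x\<in>set (lens (NetK K mk)). 1 \<le> x"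
    unfolding ln using pos by (auto dest: in_set_butlastD)
  have "2 \<le> K * l" using K l by (metis le_trans mult_le_mono nat_mult_1)
  then have w: "wf_net (NetK K mk) \<and> dims (NetK K mk) = d # lens (NetK K mk)"
    using wfI[of d "NetK K mk"] nm0 d pos2 by simp
  show ?thesis using w ln nm0 sem by simp
qed

lemma foldl_id: "(\<forall>i\<in>set xs. \<forall>y. f y i = y) \<Longrightarrow> foldl f z xs = z"
  by (induction xs arbitrary: z) auto

theorem lemma5p11:
  fixes T c :: real and f :: "real \<Rightarrow> real"
    and \<beta> :: "real^'d \<Rightarrow> real^'d" and \<sigma> :: "real^'d \<Rightarrow> real^'d^'d"
    and \<gamma> :: "real^'d \<Rightarrow> real^'d \<Rightarrow> real^'d" and g :: "real^'d \<Rightarrow> real"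
    and \<nu> :: "(real^'d) measure"
    and \<beta>e :: "real \<Rightarrow> real^'d \<Rightarrow> real^'d" and \<sigma>e :: "real \<Rightarrow> real^'d \<Rightarrow> real^'d^'d"
    and \<gamma>e :: "real \<Rightarrow> real^'d \<Rightarrow> real^'d \<Rightarrow> real^'d" and ge :: "real \<Rightarrow> real^'d \<Rightarrow> real"
    and F :: "real \<Rightarrow> real^'d \<Rightarrow> real^'d^'d" and G :: "real^'d \<Rightarrow> real^'d"
    and \<Phi>\<beta> :: "real \<Rightarrow> net" and \<Phi>\<sigma> \<Phi>F :: "real \<Rightarrow> real^'d \<Rightarrow> net"
    and W J :: "int list \<Rightarrow> 'w \<Rightarrow> real \<Rightarrow> real^'d"
    and X :: "int list \<Rightarrow> real \<Rightarrow> real \<Rightarrow> real^'d \<Rightarrow> 'w \<Rightarrow> real \<Rightarrow> real^'d"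
    and K :: nat and \<omega> :: 'w
  assumes setting: "setting T c f \<beta> \<sigma> \<gamma> g \<nu> \<beta>e \<sigma>e \<gamma>e ge"
    and F_meas: "\<forall>\<epsilon>\<in>{0<..<1}. F \<epsilon> \<in> borel_measurable borel"
    and G_meas: "G \<in> borel_measurable borel"
    and factor: "\<forall>\<epsilon>\<in>{0<..<1}. \<forall>y z. \<gamma>e \<epsilon> y z = F \<epsilon> y *v G z"
    and net_\<beta>: "\<forall>\<epsilon>\<in>{0<..<1}. realizes (\<Phi>\<beta> \<epsilon>) (\<beta>e \<epsilon>)"
    and net_\<sigma>: "\<forall>\<epsilon>\<in>{0<..<1}. \<forall>v. realizes (\<Phi>\<sigma> \<epsilon> v) (\<lambda>x. \<sigma>e \<epsilon> x *v v)"
    and net_F: "\<forall>\<epsilon>\<in>{0<..<1}. \<forall>v. realizes (\<Phi>F \<epsilon> v) (\<lambda>x. F \<epsilon> x *v v)"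
    and dims_\<sigma>: "\<forall>\<epsilon>\<in>{0<..<1}. \<forall>v. dims (\<Phi>\<sigma> \<epsilon> v) = dims (\<Phi>\<sigma> \<epsilon> 0)"
    and dims_F: "\<forall>\<epsilon>\<in>{0<..<1}. \<forall>v. dims (\<Phi>F \<epsilon> v) = dims (\<Phi>F \<epsilon> 0)"
    and K_pos: "0 < K"
    and X_sol: "\<forall>\<theta>. \<forall>\<epsilon>\<in>{0<..<1}. \<forall>t\<in>{0..<T}. \<forall>x w.
                  euler_eq T K (\<beta>e \<epsilon>) (\<sigma>e \<epsilon>) (F \<epsilon>) (W \<theta> w) (J \<theta> w) t x (X \<theta> \<epsilon> t x w)"
  shows "\<exists>\<X> :: int list \<Rightarrow> real \<Rightarrow> real \<Rightarrow> real \<Rightarrow> net.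
    (\<forall>\<theta>. \<forall>\<epsilon>\<in>{0<..<1}. \<forall>t\<in>{0..<T}. \<forall>s\<in>{t<..T}.
        \<X> \<theta> \<epsilon> t s \<in> NN \<and> hd (dims (\<X> \<theta> \<epsilon> t s)) = CARD('d) \<and> last (dims (\<X> \<theta> \<epsilon> t s)) = CARD('d) \<and>
        continuous_on UNIV (\<lambda>x::real^'d. (listv (realize (\<X> \<theta> \<epsilon> t s) (vlist x)) :: real^'d)) \<and>
        (\<forall>x. realize (\<X> \<theta> \<epsilon> t s) (vlist x) = vlist (X \<theta> \<epsilon> t x \<omega> s))) \<and>
    (\<forall>\<theta>1 \<theta>2. \<forall>\<epsilon>\<in>{0<..<1}. \<forall>t1\<in>{0..<T}. \<forall>t2\<in>{0..<T}. \<forall>s1\<in>{t1<..T}. \<forall>s2\<in>{t2<..T}.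
        dims (\<X> \<theta>1 \<epsilon> t1 s1) = dims (\<X> \<theta>2 \<epsilon> t2 s2)) \<and>
    (\<forall>\<theta>. \<forall>\<epsilon>\<in>{0<..<1}. \<forall>t\<in>{0..<T}. \<forall>s\<in>{t<..T}.
        length (dims (\<X> \<theta> \<epsilon> t s)) = K * (max (length (dims (\<Phi>\<beta> \<epsilon>)))
            (max (length (dims (\<Phi>\<sigma> \<epsilon> 0))) (length (dims (\<Phi>F \<epsilon> 0)))) - 1) + 1) \<and>
    (\<forall>\<theta>. \<forall>\<epsilon>\<in>{0<..<1}. \<forall>t\<in>{0..<T}. \<forall>s\<in>{t<..T}.
        maxnorm (dims (\<X> \<theta> \<epsilon> t s)) \<le> 2 * CARD('d) + maxnorm (dims (\<Phi>\<beta> \<epsilon>))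
            + maxnorm (dims (\<Phi>\<sigma> \<epsilon> 0)) + maxnorm (dims (\<Phi>F \<epsilon> 0)))"
proof -
  define d where "d = CARD('d)"
  have d1: "1 \<le> d" unfolding d_def by (simp add: Suc_leI)
  have T0: "0 < T" using setting unfolding setting_def Let_def by blast
  have K1: "1 \<le> K" using K_pos by simp
  have rz: "ok d d \<Phi> \<and> 2 \<le> length \<Phi> \<and> dims \<Phi> = d # lens \<Phi> \<and> (\<forall>x. realize \<Phi> (vlist x) = vlist (h x))"
    if "realizes \<Phi> (h :: real^'d \<Rightarrow> real^'d)" for \<Phi> h
  proof -
    have w: "wf_net \<Phi>" "hd (dims \<Phi>) = d" "last (dims \<Phi>) = d" "\<forall>x. realize \<Phi> (vlist x) = vlist (h x)"
      using that by (auto simp: realizes_def NN_def d_def)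
    note D = wfD[OF w(1)]
    have dd: "dims \<Phi> = d # lens \<Phi>" using D w(2) by simp
    have ne: "\<Phi> \<noteq> []" using D by auto
    then have "last (lens \<Phi>) = d" using w(3) dd by simp
    then show ?thesis using D dd w(2,4) ne by (simp add: ok_def)
  qed
  have maxle: "Max (set (lens \<Phi>)) \<le> maxnorm (dims \<Phi>)" if "dims \<Phi> = d # lens \<Phi>" "\<Phi> \<noteq> []" for \<Phi>
    unfolding maxnorm_def that(1) using that(2) by (intro Max_mono) auto
  define Lm where "Lm \<epsilon> = max (length (\<Phi>\<beta> \<epsilon>)) (max (length (\<Phi>\<sigma> \<epsilon> 0)) (length (\<Phi>F \<epsilon> 0)))" for \<epsilon>
  define nets where "nets \<epsilon> \<Delta> v w = [scaleN \<Delta> (\<Phi>\<beta> \<epsilon>), \<Phi>\<sigma> \<epsilon> v, \<Phi>F \<epsilon> w]" for \<epsilon> \<Delta> v w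
  define stp where "stp \<epsilon> \<Delta> v w = stepN d (nets \<epsilon> \<Delta> v w)" for \<epsilon> \<Delta> v w
  define Mb where "Mb \<epsilon> = maxnorm (dims (\<Phi>\<beta> \<epsilon>)) + maxnorm (dims (\<Phi>\<sigma> \<epsilon> 0)) + maxnorm (dims (\<Phi>F \<epsilon> 0))" for \<epsilon>
  have E: "ok d d (stp \<epsilon> \<Delta> v w) \<and> length (stp \<epsilon> \<Delta> v w) = Lm \<epsilon> \<and> lens (stp \<epsilon> \<Delta> v w) = lens (stp \<epsilon> 0 0 0) \<and>
     (\<forall>z\<in>set (lens (stp \<epsilon> \<Delta> v w)). z \<le> 2 * d + Mb \<epsilon>) \<and>
     (\<forall>y. realize (stp \<epsilon> \<Delta> v w) (vlist y) = vlist (y + \<Delta> *\<^sub>R \<beta>e \<epsilon> y + \<sigma>e \<epsilon> y *v v + F \<epsilon> y *v w))"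
    if \<epsilon>: "\<epsilon> \<in> {0<..<1}" for \<epsilon> \<Delta> v w
  proof -
    have rb: "ok d d (\<Phi>\<beta> \<epsilon>) \<and> 2 \<le> length (\<Phi>\<beta> \<epsilon>) \<and> dims (\<Phi>\<beta> \<epsilon>) = d # lens (\<Phi>\<beta> \<epsilon>) \<and>
        (\<forall>x. realize (\<Phi>\<beta> \<epsilon>) (vlist x) = vlist (\<beta>e \<epsilon> x))"
      by (rule rz) (use net_\<beta> \<epsilon> in blast)
    have rs: "ok d d (\<Phi>\<sigma> \<epsilon> v) \<and> 2 \<le> length (\<Phi>\<sigma> \<epsilon> v) \<and> dims (\<Phi>\<sigma> \<epsilon> v) = d # lens (\<Phi>\<sigma> \<epsilon> v) \<and>
        (\<forall>x. realize (\<Phi>\<sigma> \<epsilon> v) (vlist x) = vlist (\<sigma>e \<epsilon> x *v v))" for v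
      by (rule rz) (use net_\<sigma> \<epsilon> in blast)
    have rf: "ok d d (\<Phi>F \<epsilon> v) \<and> 2 \<le> length (\<Phi>F \<epsilon> v) \<and> dims (\<Phi>F \<epsilon> v) = d # lens (\<Phi>F \<epsilon> v) \<and>
        (\<forall>x. realize (\<Phi>F \<epsilon> v) (vlist x) = vlist (F \<epsilon> x *v v))" for v
      by (rule rz) (use net_F \<epsilon> in blast)
    have ls: "lens (\<Phi>\<sigma> \<epsilon> v) = lens (\<Phi>\<sigma> \<epsilon> 0)" for v
    proof -
      have "dims (\<Phi>\<sigma> \<epsilon> v) = dims (\<Phi>\<sigma> \<epsilon> 0)" using dims_\<sigma> \<epsilon> by blast
      then show ?thesis using rs[of v, THEN conjunct2, THEN conjunct2, THEN conjunct1]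
        rs[of 0, THEN conjunct2, THEN conjunct2, THEN conjunct1] by simp
    qed
    have lf: "lens (\<Phi>F \<epsilon> v) = lens (\<Phi>F \<epsilon> 0)" for v
    proof -
      have "dims (\<Phi>F \<epsilon> v) = dims (\<Phi>F \<epsilon> 0)" using dims_F \<epsilon> by blast
      then show ?thesis using rf[of v, THEN conjunct2, THEN conjunct2, THEN conjunct1]
        rf[of 0, THEN conjunct2, THEN conjunct2, THEN conjunct1] by simp
    qed
    have lns: "length (\<Phi>\<sigma> \<epsilon> v) = length (\<Phi>\<sigma> \<epsilon> 0)" "length (\<Phi>F \<epsilon> v) = length (\<Phi>F \<epsilon> 0)" for v
      using ls[of v] lf[of v] by (metis lens_simps(4))+
    have neb: "\<Phi>\<beta> \<epsilon> \<noteq> []" using rb by (auto simp: ok_def)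
    have okn: "\<forall>N\<in>set (nets \<epsilon> D V Wv). ok d d N \<and> 2 \<le> length N" for D V Wv
      using rb rs[of V] rf[of Wv] ok_scaleN[of d d "\<Phi>\<beta> \<epsilon>" D] length_scaleN[OF neb, of D] by (simp add: nets_def)
    have nne: "nets \<epsilon> D V Wv \<noteq> []" for D V Wv by (simp add: nets_def)
    note SP = step_props[OF d1 okn nne]
    have len: "length (stp \<epsilon> \<Delta> v w) = Lm \<epsilon>"
      using SP[of \<Delta> v w] rb rs[of v] rf[of w] lns[of v] lns[of w] length_scaleN[OF neb, of \<Delta>]
      by (simp add: stp_def nets_def Lm_def max_def)
    have mapl: "map length (nets \<epsilon> D V Wv) = [length (\<Phi>\<beta> \<epsilon>), length (\<Phi>\<sigma> \<epsilon> 0), length (\<Phi>F \<epsilon> 0)]" for D V Wv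
      using lns length_scaleN[OF neb] by (simp add: nets_def)
    have ordeq: "ordOf (nets \<epsilon> D V Wv) = ordOf (nets \<epsilon> 0 0 0)" for D V Wv
      unfolding ordOf_def mapl by (simp add: nets_def)
    have ord3: "i \<in> set (ordOf (nets \<epsilon> D V Wv)) \<Longrightarrow> i = 0 \<or> i = 1 \<or> i = 2" for i D V Wv
      using ordOf_set[of "nets \<epsilon> D V Wv"] by (auto simp: nets_def)
    have lenseq: "lens (stp \<epsilon> \<Delta> v w) = lens (stp \<epsilon> 0 0 0)"
    proof -
      have "map (\<lambda>i. lens (nets \<epsilon> \<Delta> v w ! i)) (ordOf (nets \<epsilon> \<Delta> v w)) =
            map (\<lambda>i. lens (nets \<epsilon> 0 0 0 ! i)) (ordOf (nets \<epsilon> 0 0 0))"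
        unfolding ordeq[of \<Delta> v w]
      proof (intro map_cong refl)
        fix i assume "i \<in> set (ordOf (nets \<epsilon> 0 0 0))"
        then have "i = 0 \<or> i = 1 \<or> i = 2" by (rule ord3)
        then show "lens (nets \<epsilon> \<Delta> v w ! i) = lens (nets \<epsilon> 0 0 0 ! i)"
          using ls lf lens_scaleN[OF neb] by (auto simp: nets_def)
      qed
      then show ?thesis using SP[of \<Delta> v w] SP[of 0 0 0] by (simp add: stp_def)
    qed
    have bnd: "\<forall>z\<in>set (lens (stp \<epsilon> \<Delta> v w)). z \<le> 2 * d + Mb \<epsilon>"
    proof -
      have "sum_list (map (\<lambda>N. Max (set (lens N))) (nets \<epsilon> \<Delta> v w)) =
          Max (set (lens (\<Phi>\<beta> \<epsilon>))) + Max (set (lens (\<Phi>\<sigma> \<epsilon> 0))) + Max (set (lens (\<Phi>F \<epsilon> 0)))"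
        by (simp add: nets_def ls[of v] lf[of w] lens_scaleN[OF neb])
      also have "\<dots> \<le> Mb \<epsilon>" unfolding Mb_def
        using maxle[of "\<Phi>\<beta> \<epsilon>"] maxle[of "\<Phi>\<sigma> \<epsilon> 0"] maxle[of "\<Phi>F \<epsilon> 0"] rb rs[of 0] rf[of 0]
        unfolding ok_def by (intro add_mono) simp_all
      finally show ?thesis using SP[of \<Delta> v w] unfolding stp_def by fastforce
    qed
    have sem: "realize (stp \<epsilon> \<Delta> v w) (vlist y) = vlist (y + \<Delta> *\<^sub>R \<beta>e \<epsilon> y + \<sigma>e \<epsilon> y *v v + F \<epsilon> y *v w)" for y
    proof -
      define h where "h i y = [\<Delta> *\<^sub>R \<beta>e \<epsilon> y, \<sigma>e \<epsilon> y *v v, F \<epsilon> y *v w] ! i" for i y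
      have hi: "\<forall>i\<in>set (ordOf (nets \<epsilon> \<Delta> v w)). realize (nets \<epsilon> \<Delta> v w ! i) (vlist y) = vlist (h i y)"
      proof
        fix i assume "i \<in> set (ordOf (nets \<epsilon> \<Delta> v w))"
        then have "i = 0 \<or> i = 1 \<or> i = 2" by (rule ord3)
        then show "realize (nets \<epsilon> \<Delta> v w ! i) (vlist y) = vlist (h i y)"
          using rb rs[of v] rf[of w] realize_scaleN[OF neb, of \<Delta>] by (auto simp: nets_def h_def vlist_scale)
      qed
      have "realize (stp \<epsilon> \<Delta> v w) (vlist y) = vlist (y + sum_list (map (\<lambda>i. h i y) (ordOf (nets \<epsilon> \<Delta> v w))))"
        using SP[of \<Delta> v w] foldl_vlist[where h=h and y=y and ord="ordOf (nets \<epsilon> \<Delta> v w)" and nets="nets \<epsilon> \<Delta> v w" and y0=y, OF hi] by (simp add: stp_def d_def)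
      also have "sum_list (map (\<lambda>i. h i y) (ordOf (nets \<epsilon> \<Delta> v w))) = h 0 y + (h (Suc 0) y + h (Suc (Suc 0)) y)"
        using sum_perm_idx[of "\<lambda>i. h i y" "nets \<epsilon> \<Delta> v w"] by (simp add: nets_def)
      finally show ?thesis by (simp add: h_def add.assoc)
    qed
    show ?thesis using SP[of \<Delta> v w] len lenseq bnd sem by (simp add: stp_def)
  qed
  define mkf where "mkf \<theta> \<epsilon> t s i = (let P = part T K t s in if i < length P - 1 then
      stp \<epsilon> (P ! Suc i - P ! i) (W \<theta> \<omega> (P ! Suc i) - W \<theta> \<omega> (P ! i)) (J \<theta> \<omega> (P ! Suc i) - J \<theta> \<omega> (P ! i))
      else stp \<epsilon> 0 0 0)" for \<theta> \<epsilon> t s i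
  define Ls where "Ls \<epsilon> = lens (stp \<epsilon> 0 0 0)" for \<epsilon>
  have mkok: "\<forall>i<K. ok d d (mkf \<theta> \<epsilon> t s i) \<and> length (mkf \<theta> \<epsilon> t s i) = Lm \<epsilon> \<and> lens (mkf \<theta> \<epsilon> t s i) = Ls \<epsilon>"
    if \<epsilon>: "\<epsilon> \<in> {0<..<1}" for \<theta> \<epsilon> t s
    using E[OF \<epsilon>] by (simp add: mkf_def Let_def Ls_def)
  have Lm2: "2 \<le> Lm \<epsilon>" if \<epsilon>: "\<epsilon> \<in> {0<..<1}" for \<epsilon>
  proof -
    have "2 \<le> length (\<Phi>\<beta> \<epsilon>)" by (rule rz[THEN conjunct2, THEN conjunct1]) (use net_\<beta> \<epsilon> in blast)
    then show ?thesis by (simp add: Lm_def)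
  qed
  have sem: "realize (NetK K (mkf \<theta> \<epsilon> t s)) (vlist x) = vlist (X \<theta> \<epsilon> t x \<omega> s)"
    if \<epsilon>: "\<epsilon> \<in> {0<..<1}" and t: "t \<in> {0..<T}" and s: "s \<in> {t<..T}" for \<theta> \<epsilon> t s x
  proof -
    have t0: "0 \<le> t" and ts: "t < s" and sT: "s \<le> T" using t s by auto
    define P where "P = part T K t s"
    define n where "n = length P - 1"
    have nK: "n \<le> K" using P_len(2)[OF T0 K_pos t0 ts sT] by (simp add: n_def P_def)
    have nP: "n < length P" using P_len(1)[OF T0 K_pos t0 ts sT] by (simp add: n_def P_def)
    define Sf where "Sf i y = (if i < n then y + (P ! Suc i - P ! i) *\<^sub>R \<beta>e \<epsilon> y + \<sigma>e \<epsilon> y *v (W \<theta> \<omega> (P ! Suc i) - W \<theta> \<omega> (P ! i))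
        + F \<epsilon> y *v (J \<theta> \<omega> (P ! Suc i) - J \<theta> \<omega> (P ! i)) else y)" for i y
    have r1: "realize (mkf \<theta> \<epsilon> t s i) (vlist y) = vlist (Sf i y)" for i y
      using E[OF \<epsilon>] by (simp add: mkf_def Let_def Sf_def P_def[symmetric] n_def)
    have r2: "foldl (\<lambda>y i. realize (mkf \<theta> \<epsilon> t s i) y) (vlist x) [0..<m] = vlist (foldl (\<lambda>y i. Sf i y) x [0..<m])" for m
      by (induction m) (simp_all add: r1)
    have r3: "foldl (\<lambda>y i. Sf i y) x [0..<K] = foldl (\<lambda>y i. Sf i y) x [0..<n]"
    proof -
      have "[0..<K] = [0..<n] @ [n..<K]" using nK by (metis le_add_diff_inverse upt_add_eq_append zero_le)
      moreover have "foldl (\<lambda>y i. Sf i y) z [n..<K] = z" for z by (rule foldl_id) (auto simp: Sf_def)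
      ultimately show ?thesis by simp
    qed
    have Esol: "euler_eq T K (\<beta>e \<epsilon>) (\<sigma>e \<epsilon>) (F \<epsilon>) (W \<theta> \<omega>) (J \<theta> \<omega>) t x (X \<theta> \<epsilon> t x \<omega>)"
      using X_sol \<epsilon> t by blast
    have r4: "X \<theta> \<epsilon> t x \<omega> (P ! n) = foldl (\<lambda>y i. Sf i y) x [0..<n]"
      unfolding P_def using X_iter[OF T0 K_pos t0 ts sT Esol, of n] nP
      by (simp add: P_def[symmetric]) (rule foldl_cong, auto simp: Sf_def)
    have r5: "P ! n = s" using P_last[OF T0 K_pos t0 ts sT] by (simp add: P_def n_def)
    have "realize (NetK K (mkf \<theta> \<epsilon> t s)) (vlist x) = foldl (\<lambda>y i. realize (mkf \<theta> \<epsilon> t s i) y) (vlist x) [0..<K]"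
      using NetK_facts[OF K1 d1 mkok[OF \<epsilon>, of \<theta> t s] Lm2[OF \<epsilon>]] by (simp add: d_def)
    then show ?thesis using r2 r3 r4 r5 by simp
  qed
  show ?thesis
  proof (intro exI[of _ "\<lambda>\<theta> \<epsilon> t s. NetK K (mkf \<theta> \<epsilon> t s)"] conjI allI ballI)
    fix \<theta> :: "int list" and \<epsilon> t s :: real assume \<epsilon>: "\<epsilon> \<in> {0<..<1}" and t: "t \<in> {0..<T}" and s: "s \<in> {t<..T}"
    note N = NetK_facts[OF K1 d1 mkok[OF \<epsilon>, of \<theta> t s] Lm2[OF \<epsilon>]]
    have lne: "lens (NetK K (mkf \<theta> \<epsilon> t s)) \<noteq> []" using N by simp
    show "NetK K (mkf \<theta> \<epsilon> t s) \<in> NN" using N by (simp add: NN_def)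
    show "hd (dims (NetK K (mkf \<theta> \<epsilon> t s))) = CARD('d)" using N by (simp add: d_def)
    have dl: "dims (NetK K (mkf \<theta> \<epsilon> t s)) = d # lens (NetK K (mkf \<theta> \<epsilon> t s))"
      "last (lens (NetK K (mkf \<theta> \<epsilon> t s))) = d" using N unfolding d_def by blast+
    have "last (dims (NetK K (mkf \<theta> \<epsilon> t s))) = last (lens (NetK K (mkf \<theta> \<epsilon> t s)))"
      unfolding dl(1) using lne by (rule last_ConsR)
    then show "last (dims (NetK K (mkf \<theta> \<epsilon> t s))) = CARD('d)" using dl(2) by (simp add: d_def)
    show "continuous_on UNIV (\<lambda>x::real^'d. (listv (realize (NetK K (mkf \<theta> \<epsilon> t s)) (vlist x)) :: real^'d))"
      by (rule listv_cont) (use N in \<open>simp_all add: d_def\<close>)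
    fix x show "realize (NetK K (mkf \<theta> \<epsilon> t s)) (vlist x) = vlist (X \<theta> \<epsilon> t x \<omega> s)"
      by (rule sem[OF \<epsilon> t s])
  next
    fix \<theta>1 \<theta>2 :: "int list" and \<epsilon> t1 t2 s1 s2 :: real assume \<epsilon>: "\<epsilon> \<in> {0<..<1}"
    show "dims (NetK K (mkf \<theta>1 \<epsilon> t1 s1)) = dims (NetK K (mkf \<theta>2 \<epsilon> t2 s2))"
      using NetK_facts[OF K1 d1 mkok[OF \<epsilon>, of \<theta>1 t1 s1] Lm2[OF \<epsilon>]]
        NetK_facts[OF K1 d1 mkok[OF \<epsilon>, of \<theta>2 t2 s2] Lm2[OF \<epsilon>]] by simp
  next
    fix \<theta> :: "int list" and \<epsilon> t s :: real assume \<epsilon>: "\<epsilon> \<in> {0<..<1}"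
    note N = NetK_facts[OF K1 d1 mkok[OF \<epsilon>, of \<theta> t s] Lm2[OF \<epsilon>]]
    have l: "length (dims \<Phi>) = Suc (length \<Phi>)" if "realizes \<Phi> (h :: real^'d \<Rightarrow> real^'d)" for \<Phi> h
      using rz[OF that] by simp
    have lb: "length (dims (\<Phi>\<beta> \<epsilon>)) = Suc (length (\<Phi>\<beta> \<epsilon>))" by (rule l) (use net_\<beta> \<epsilon> in blast)
    have ls: "length (dims (\<Phi>\<sigma> \<epsilon> 0)) = Suc (length (\<Phi>\<sigma> \<epsilon> 0))" by (rule l) (use net_\<sigma> \<epsilon> in blast)
    have lf: "length (dims (\<Phi>F \<epsilon> 0)) = Suc (length (\<Phi>F \<epsilon> 0))" by (rule l) (use net_F \<epsilon> in blast)
    have n1: "dims (NetK K (mkf \<theta> \<epsilon> t s)) = d # lens (NetK K (mkf \<theta> \<epsilon> t s))"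
      "length (NetK K (mkf \<theta> \<epsilon> t s)) = K * Lm \<epsilon>" using N by blast+
    have "length (dims (NetK K (mkf \<theta> \<epsilon> t s))) = Suc (K * Lm \<epsilon>)"
      unfolding n1(1) using n1(2) by simp
    then show "length (dims (NetK K (mkf \<theta> \<epsilon> t s))) = K * (max (length (dims (\<Phi>\<beta> \<epsilon>)))
            (max (length (dims (\<Phi>\<sigma> \<epsilon> 0))) (length (dims (\<Phi>F \<epsilon> 0)))) - 1) + 1"
      unfolding lb ls lf by (simp add: Lm_def)
  next
    fix \<theta> :: "int list" and \<epsilon> t s :: real assume \<epsilon>: "\<epsilon> \<in> {0<..<1}"
    note N = NetK_facts[OF K1 d1 mkok[OF \<epsilon>, of \<theta> t s] Lm2[OF \<epsilon>]]
    define B where "B = 2 * d + Mb \<epsilon>"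
    have okL: "ok d d (stp \<epsilon> 0 0 0)" using E[OF \<epsilon>] by simp
    have bL: "\<forall>z\<in>set (Ls \<epsilon>). z \<le> B" using E[OF \<epsilon>, of 0 0 0] by (simp add: Ls_def B_def)
    have lastL: "last (Ls \<epsilon>) = d" using okL by (simp add: ok_def Ls_def)
    have dB: "2 * d \<le> B" by (simp add: B_def)
    have "\<forall>z\<in>set (dims (NetK K (mkf \<theta> \<epsilon> t s))). z \<le> B"
      using N bL lastL dB by (auto dest: in_set_butlastD)
    then have "maxnorm (dims (NetK K (mkf \<theta> \<epsilon> t s))) \<le> B"
      unfolding maxnorm_def using N by (simp add: Max_le_iff)
    then show "maxnorm (dims (NetK K (mkf \<theta> \<epsilon> t s))) \<le> 2 * CARD('d) + maxnorm (dims (\<Phi>\<beta> \<epsilon>))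
            + maxnorm (dims (\<Phi>\<sigma> \<epsilon> 0)) + maxnorm (dims (\<Phi>F \<epsilon> 0))"
      by (simp add: B_def Mb_def d_def add.assoc)
  qed
qed

end
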